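(* Let $N\ge1$, $1<p<\infty$, $0<sp<N$, $m>1$, $\chi>0$ and $M>0$. Then: - if $1<m<m_c$, then $\inf_{\mathcal Y_M}\mathcal F_{s,p}=-\infty$; - if $m=m_c$, then $\inf_{\mathcal Y_M}\mathcal F_{s,p}=0$ when $0<M\le M_c$, and $\inf_{\mathcal Y_M}\mathcal F_{s,p}=-\infty$ when $M>M_c$; - if $m>m_c$, then $\inf_{\mathcal Y_M}\mathcal F_{s,p}\in(-\infty,0)$.
   Context: Riesz kernel. $K_{s/2}(x)=c_{N,s/2}|x|^{s-N}$, where $c_{N,s}=\pi^{-N/2}2^{-2s}\Gamma(N/2-s)/\Gamma(s)$. Exponents. $p'=p/(p-1)$, $p^*_s=Np/(N-sp)$, $m_c:=p'-sp'/N$, and $\vartheta_0:=1-m'/p^*_s$. HLS constant. $$H^*_{m,s}:=\sup\Big\{\frac{\|K_{s/2}*h\|_{p'}^{p'}}{\|h\|_1^{p'\vartheta_0}\|h\|_m^{p'(1-\vartheta_0)}}:\ h\in L^1\cap L^m\setminus\{0\}\Big\}.$$ Critical mass. $M_c:=\big(p^*_s/(\chi H^*_{m_c,s})\big)^{N/(sp')}$. Admissible class. $\mathcal Y_M=\{\rho\in L^1_+\cap L^m(\mathbb R^N):\ \int\rho=M,\ \int x\rho=0\}$. Free energy. $\displaystyle\mathcal F_{s,p}(\rho)=\frac1{m-1}\int\rho^m-\frac{\chi}{p'}\int(K_{s/2}*\rho)^{p'}$. *)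

theory Defs
  imports "HOL-Analysis.Analysis"
begin

text \<open>Ambient space: a Euclidean space 'a of dimension N = DIM('a), with Lebesgue measure lborel.\<close>

definition conj_exp :: "real \<Rightarrow> real" where
  "conj_exp p = p / (p - 1)"

definition sob_exp :: "nat \<Rightarrow> real \<Rightarrow> real \<Rightarrow> real" where
  "sob_exp N s p = real N * p / (real N - s * p)"

definition crit_exp :: "nat \<Rightarrow> real \<Rightarrow> real \<Rightarrow> real" where
  "crit_exp N s p = conj_exp p - s * conj_exp p / real N"

definition theta0 :: "nat \<Rightarrow> real \<Rightarrow> real \<Rightarrow> real \<Rightarrow> real" where
  "theta0 N s p m = 1 - conj_exp m / sob_exp N s p"

text \<open>Riesz constant c_{N,s} and kernel K_{s/2}(x) = c_{N,s/2} |x|^(s-N).\<close>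
definition riesz_const :: "nat \<Rightarrow> real \<Rightarrow> real" where
  "riesz_const N s = pi powr (- real N / 2) * 2 powr (-2 * s) * Gamma (real N / 2 - s) / Gamma s"

definition riesz_kernel :: "real \<Rightarrow> 'a::euclidean_space \<Rightarrow> real" where
  "riesz_kernel s x = riesz_const DIM('a) (s / 2) * norm x powr (s - real DIM('a))"

definition riesz_conv :: "real \<Rightarrow> ('a::euclidean_space \<Rightarrow> real) \<Rightarrow> 'a \<Rightarrow> real" where
  "riesz_conv s h x = (\<integral>y. riesz_kernel s (x - y) * h y \<partial>lborel)"

definition riesz_conv_nn :: "real \<Rightarrow> ('a::euclidean_space \<Rightarrow> real) \<Rightarrow> 'a \<Rightarrow> ennreal" where
  "riesz_conv_nn s h x = (\<integral>\<^sup>+y. ennreal (riesz_kernel s (x - y) * h y) \<partial>lborel)"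

definition enn_powr :: "ennreal \<Rightarrow> real \<Rightarrow> ennreal" where
  "enn_powr e q = (if e = \<infinity> then \<infinity> else ennreal (enn2real e powr q))"

definition in_Lq :: "real \<Rightarrow> ('a::euclidean_space \<Rightarrow> real) \<Rightarrow> bool" where
  "in_Lq q h \<longleftrightarrow> h \<in> borel_measurable lborel \<and> integrable lborel (\<lambda>x. \<bar>h x\<bar> powr q)"

definition Lq_norm :: "real \<Rightarrow> ('a::euclidean_space \<Rightarrow> real) \<Rightarrow> real" where
  "Lq_norm q h = (\<integral>x. \<bar>h x\<bar> powr q \<partial>lborel) powr (1 / q)"

definition HLS_const :: "'a::euclidean_space itself \<Rightarrow> real \<Rightarrow> real \<Rightarrow> real \<Rightarrow> ereal" where
  "HLS_const _ p m s =
     (let N = DIM('a); q = conj_exp p; th = theta0 N s p m in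
      Sup ((\<lambda>h::'a \<Rightarrow> real.
              enn2ereal (\<integral>\<^sup>+x. ennreal (\<bar>riesz_conv s h x\<bar> powr q) \<partial>lborel)
              / ereal (Lq_norm 1 h powr (q * th) * Lq_norm m h powr (q * (1 - th))))
           ` {h. in_Lq 1 h \<and> in_Lq m h \<and> \<not> (AE x in lborel. h x = 0)}))"

definition crit_mass :: "'a::euclidean_space itself \<Rightarrow> real \<Rightarrow> real \<Rightarrow> real \<Rightarrow> real" where
  "crit_mass A p s chi =
     (let N = DIM('a) in
      (sob_exp N s p / (chi * real_of_ereal (HLS_const A p (crit_exp N s p) s)))
        powr (real N / (s * conj_exp p)))"

definition adm_class :: "real \<Rightarrow> real \<Rightarrow> ('a::euclidean_space \<Rightarrow> real) set" where
  "adm_class m M = {\<rho>. (\<forall>x. 0 \<le> \<rho> x) \<and> integrable lborel \<rho> \<and> in_Lq m \<rho>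
      \<and> (\<integral>x. \<rho> x \<partial>lborel) = M
      \<and> integrable lborel (\<lambda>x. \<rho> x *\<^sub>R x) \<and> (\<integral>x. \<rho> x *\<^sub>R x \<partial>lborel) = 0}"

text \<open>Free energy F_{s,p}, with values in the extended reals (the interaction term may be infinite).\<close>
definition free_energy :: "real \<Rightarrow> real \<Rightarrow> real \<Rightarrow> real \<Rightarrow> ('a::euclidean_space \<Rightarrow> real) \<Rightarrow> ereal" where
  "free_energy s p m chi \<rho> =
     ereal (1 / (m - 1) * (\<integral>x. \<rho> x powr m \<partial>lborel))
     - ereal (chi / conj_exp p) *
       enn2ereal (\<integral>\<^sup>+x. enn_powr (riesz_conv_nn s \<rho> x) (conj_exp p) \<partial>lborel)"

end

theory Submission
  imports Defs
begin

lemma enn_powr_ennreal[simp]: "0 \<le> x \<Longrightarrow> enn_powr (ennreal x) q = ennreal (x powr q)"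
  by (simp add: enn_powr_def)

lemma enn_powr_top[simp]: "enn_powr top q = top"
  by (simp add: enn_powr_def)

lemma enn_powr_zero[simp]: "enn_powr 0 q = 0"
  by (simp add: enn_powr_def)

lemma enn_powr_one[simp]: "enn_powr a 1 = a"
  by (cases a) (auto simp: enn_powr_def)

lemma enn_powr_eq_top_iff: "enn_powr a q = top \<longleftrightarrow> a = top"
  by (simp add: enn_powr_def)

lemma enn_powr_mono:
  assumes "0 \<le> q" "a \<le> b" shows "enn_powr a q \<le> enn_powr b q"
proof (cases "b = top")
  case False
  then obtain y where b: "b = ennreal y" "0 \<le> y" by (cases b) auto
  then have "a \<noteq> top" using assms(2) by (metis ennreal_neq_top top_unique)
  then obtain x where a: "a = ennreal x" "0 \<le> x" by (cases a) auto
  have xy: "x \<le> y" using assms(2) a b by simp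
  show ?thesis
  proof (cases "x = 0")
    case True then show ?thesis using a b by simp
  next
    case False then show ?thesis using a b xy assms by (auto intro!: ennreal_leI powr_mono2)
  qed
qed simp

lemma enn_powr_pos: "0 < a \<Longrightarrow> 0 < enn_powr a q"
  by (cases a) (auto simp: enn_powr_def)

lemma enn_powr_mult:
  assumes "0 < q" shows "enn_powr (a * b) q = enn_powr a q * enn_powr b q"
proof -
  { fix x y :: real assume "0 \<le> x" "0 \<le> y"
    then have "enn_powr (ennreal x * ennreal y) q = enn_powr (ennreal x) q * enn_powr (ennreal y) q"
      by (simp add: ennreal_mult[symmetric] powr_mult) }
  note fin = this
  { fix x :: real assume "0 \<le> x"
    then have "enn_powr (ennreal x * top) q = enn_powr (ennreal x) q * enn_powr top q"
      "enn_powr (top * ennreal x) q = enn_powr top q * enn_powr (ennreal x) q"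
      using assms by (cases "x = 0"; simp add: ennreal_mult_top ennreal_top_mult)+ }
  note inf = this
  show ?thesis
    by (cases a; cases b) (auto simp: fin inf)
qed

lemma enn_powr_powr:
  assumes "0 < q" "0 < r" shows "enn_powr (enn_powr a q) r = enn_powr a (q * r)"
  by (cases a) (auto simp: enn_powr_def powr_powr)

lemma enn_powr_add_le:
  assumes "0 \<le> q" shows "enn_powr (a + b) q \<le> ennreal (2 powr q) * (enn_powr a q + enn_powr b q)"
proof (cases "a = top \<or> b = top")
  case True then show ?thesis by (auto simp: ennreal_mult_top)
next
  case False
  then obtain x y where xy: "a = ennreal x" "b = ennreal y" "0 \<le> x" "0 \<le> y"
    by (metis ennreal_cases)
  have "(x + y) powr q \<le> (2 * max x y) powr q"
    using xy assms by (intro powr_mono2) auto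
  also have "\<dots> = 2 powr q * max x y powr q" using xy by (simp add: powr_mult)
  also have "\<dots> \<le> 2 powr q * (x powr q + y powr q)"
    by (intro mult_left_mono) (auto simp: max_def)
  finally show ?thesis using xy
    by (simp add: ennreal_plus[symmetric] ennreal_mult[symmetric] del: ennreal_plus)
qed

lemma measurable_enn_powr[measurable]:
  assumes [measurable]: "f \<in> borel_measurable M"
  shows "(\<lambda>x. enn_powr (f x) q) \<in> borel_measurable M"
  unfolding enn_powr_def by measurable

lemma enn_powr_SUP_le:
  assumes q: "0 < q"
  shows "enn_powr (SUP n. c n) q \<le> (SUP n. enn_powr (c n :: ennreal) q)"
proof (rule ccontr)
  let ?L = "SUP n. enn_powr (c n) q"
  assume "\<not> ?thesis"
  then have lt: "?L < enn_powr (SUP n. c n) q" by simp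
  then have Lfin: "?L < top" using top.not_eq_extremum by fastforce
  have "c n \<le> enn_powr ?L (1/q)" for n
  proof -
    have "enn_powr (c n) q \<le> ?L" by (rule SUP_upper) simp
    then have "enn_powr (enn_powr (c n) q) (1/q) \<le> enn_powr ?L (1/q)"
      using q by (intro enn_powr_mono) auto
    then show ?thesis using q by (simp add: enn_powr_powr)
  qed
  then have "(SUP n. c n) \<le> enn_powr ?L (1/q)" by (rule SUP_least)
  then have "enn_powr (SUP n. c n) q \<le> enn_powr (enn_powr ?L (1/q)) q"
    using q by (intro enn_powr_mono) auto
  also have "\<dots> = ?L" using q by (simp add: enn_powr_powr)
  finally show False using lt by simp
qed

lemma holder_log:
  fixes f g :: "'b \<Rightarrow> real"
  assumes [measurable]: "f \<in> borel_measurable M" "g \<in> borel_measurable M"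
    and nnf: "\<And>x. 0 \<le> f x" and nng: "\<And>x. 0 \<le> g x" and th: "0 < \<theta>" "\<theta> < 1"
  shows "(\<integral>\<^sup>+x. ennreal (f x powr \<theta> * g x powr (1-\<theta>)) \<partial>M)
     \<le> enn_powr (\<integral>\<^sup>+x. f x \<partial>M) \<theta> * enn_powr (\<integral>\<^sup>+x. g x \<partial>M) (1-\<theta>)"
proof -
  define A where "A = (\<integral>\<^sup>+x. f x \<partial>M)"
  define B where "B = (\<integral>\<^sup>+x. g x \<partial>M)"
  show ?thesis
  proof (cases "A = 0 \<or> B = 0")
    case True
    then have "AE x in M. f x = 0 \<or> g x = 0"
      unfolding A_def B_def using nnf nng
      by (auto simp: nn_integral_0_iff_AE elim!: AE_mp)
    then have "AE x in M. ennreal (f x powr \<theta> * g x powr (1-\<theta>)) = 0"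
      by (auto elim!: AE_mp)
    then have "(\<integral>\<^sup>+x. ennreal (f x powr \<theta> * g x powr (1-\<theta>)) \<partial>M) = 0"
      by (simp add: nn_integral_0_iff_AE)
    then show ?thesis by simp
  next
    case nz: False
    show ?thesis
    proof (cases "A = top \<or> B = top")
      case True
      have "enn_powr A \<theta> * enn_powr B (1-\<theta>) = top"
        using True nz enn_powr_pos[of A \<theta>] enn_powr_pos[of B "1-\<theta>"]
        by (auto simp: ennreal_mult_top ennreal_top_mult enn_powr_eq_top_iff zero_less_iff_neq_zero
                 intro: ennreal_top_mult ennreal_mult_top)
      then show ?thesis unfolding A_def B_def by simp
    next
      case False
      then obtain a b where ab: "A = ennreal a" "B = ennreal b" "0 \<le> a" "0 \<le> b"
        by (metis ennreal_cases)
      then have apos: "0 < a" and bpos: "0 < b" using nz by auto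
      define C where "C = a powr \<theta> * b powr (1-\<theta>)"
      have Cpos: "0 < C" using apos bpos by (simp add: C_def)
      have pw: "f x powr \<theta> * g x powr (1-\<theta>) \<le> C * (\<theta>/a * f x + (1-\<theta>)/b * g x)" for x
      proof (cases "f x = 0 \<or> g x = 0")
        case True then show ?thesis using Cpos th apos bpos nnf[of x] nng[of x] by auto
      next
        case False
        then have fp: "0 < f x" "0 < g x" using nnf[of x] nng[of x] by auto
        have "(f x / a) powr \<theta> * (g x / b) powr (1-\<theta>) \<le> \<theta> * (f x / a) + (1-\<theta>) * (g x / b)"
          using th fp apos bpos by (intro Youngs_inequality_0) auto
        moreover have "(f x / a) powr \<theta> * (g x / b) powr (1-\<theta>) = f x powr \<theta> * g x powr (1-\<theta>) / C"
          using fp apos bpos by (simp add: C_def powr_divide)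
        ultimately show ?thesis using Cpos by (simp add: field_simps)
      qed
      have "(\<integral>\<^sup>+x. ennreal (f x powr \<theta> * g x powr (1-\<theta>)) \<partial>M)
          \<le> (\<integral>\<^sup>+x. ennreal (C*\<theta>/a) * ennreal (f x) + ennreal (C*(1-\<theta>)/b) * ennreal (g x) \<partial>M)"
      proof (rule nn_integral_mono)
        fix x
        have "ennreal (f x powr \<theta> * g x powr (1-\<theta>)) \<le> ennreal (C * (\<theta>/a * f x + (1-\<theta>)/b * g x))"
          using pw by (rule ennreal_leI)
        also have "\<dots> = ennreal (C*\<theta>/a) * ennreal (f x) + ennreal (C*(1-\<theta>)/b) * ennreal (g x)"
        proof -
          have e: "C * (\<theta>/a * f x + (1-\<theta>)/b * g x) = (C*\<theta>/a) * f x + (C*(1-\<theta>)/b) * g x"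
            by (simp add: algebra_simps)
          have n1: "0 \<le> (C*\<theta>/a) * f x" "0 \<le> (C*(1-\<theta>)/b) * g x"
            using Cpos th apos bpos nnf[of x] nng[of x] by auto
          have "ennreal ((C*\<theta>/a) * f x + (C*(1-\<theta>)/b) * g x) = ennreal ((C*\<theta>/a) * f x) + ennreal ((C*(1-\<theta>)/b) * g x)"
            using n1 by (rule ennreal_plus)
          also have "\<dots> = ennreal (C*\<theta>/a) * ennreal (f x) + ennreal (C*(1-\<theta>)/b) * ennreal (g x)"
            using Cpos th apos bpos nnf[of x] nng[of x]
            by (metis (no_types, lifting) diff_gt_0_iff_gt divide_nonneg_pos ennreal_mult less_eq_real_def mult_nonneg_nonneg)
          finally show ?thesis unfolding e .
        qed
        finally show "ennreal (f x powr \<theta> * g x powr (1-\<theta>)) \<le> \<dots>" .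
      qed
      also have "\<dots> = ennreal (C*\<theta>/a) * A + ennreal (C*(1-\<theta>)/b) * B"
        unfolding A_def B_def by (simp add: nn_integral_add nn_integral_cmult)
      also have "\<dots> = ennreal C"
        using ab Cpos th apos bpos
        by (simp add: ennreal_mult[symmetric] ennreal_plus[symmetric] field_simps del: ennreal_plus)
      also have "\<dots> = enn_powr A \<theta> * enn_powr B (1-\<theta>)"
        using ab by (simp add: C_def ennreal_mult)
      finally show ?thesis unfolding A_def B_def .
    qed
  qed
qed

lemma nn_integral_affine_eucl:
  fixes f :: "'a::euclidean_space \<Rightarrow> ennreal"
  assumes [measurable]: "f \<in> borel_measurable borel" and c: "c \<noteq> 0"
  shows "(\<integral>\<^sup>+x. f x \<partial>lborel) = ennreal (\<bar>c\<bar> ^ DIM('a)) * (\<integral>\<^sup>+x. f (t + c *\<^sub>R x) \<partial>lborel)"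
  by (subst lborel_affine[OF c, of t])
     (simp add: nn_integral_density nn_integral_distr nn_integral_cmult)

lemma nn_integral_translate_eucl:
  fixes f :: "'a::euclidean_space \<Rightarrow> ennreal"
  assumes [measurable]: "f \<in> borel_measurable borel"
  shows "(\<integral>\<^sup>+x. f (x + t) \<partial>lborel) = (\<integral>\<^sup>+x. f x \<partial>lborel)"
  using nn_integral_affine_eucl[OF assms, of 1 t] by (simp add: add.commute)

lemma lborel_integrable_affine_eucl:
  fixes f :: "'a::euclidean_space \<Rightarrow> 'b :: {banach, second_countable_topology}"
  assumes f: "integrable lborel f" and c: "c \<noteq> 0"
  shows "integrable lborel (\<lambda>x. f (t + c *\<^sub>R x))"
proof -
  have [measurable]: "f \<in> borel_measurable borel" using f by auto
  show ?thesis
    using f unfolding integrable_iff_bounded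
    by (subst (asm) nn_integral_affine_eucl[where c=c and t=t]) (auto simp: c ennreal_mult_less_top)
qed

lemma lborel_integrable_affine_eucl_iff:
  fixes f :: "'a::euclidean_space \<Rightarrow> 'b :: {banach, second_countable_topology}"
  assumes c: "c \<noteq> 0"
  shows "integrable lborel (\<lambda>x. f (t + c *\<^sub>R x)) \<longleftrightarrow> integrable lborel f"
proof
  assume "integrable lborel (\<lambda>x. f (t + c *\<^sub>R x))"
  from lborel_integrable_affine_eucl[OF this, of "1/c" "- t /\<^sub>R c"] c
  show "integrable lborel f" by (simp add: algebra_simps)
qed (rule lborel_integrable_affine_eucl[OF _ c])

lemma lborel_integral_affine_eucl:
  fixes f :: "'a::euclidean_space \<Rightarrow> 'b :: {banach, second_countable_topology}"
  assumes c: "c \<noteq> 0"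
  shows "(\<integral>x. f x \<partial>lborel) = (\<bar>c\<bar> ^ DIM('a)) *\<^sub>R (\<integral>x. f (t + c *\<^sub>R x) \<partial>lborel)"
proof cases
  assume f: "integrable lborel f"
  then have [measurable]: "f \<in> borel_measurable borel" by auto
  show ?thesis
    using c f lborel_integrable_affine_eucl[OF f c, of t]
    by (subst lborel_affine[OF c, of t]) (simp add: integral_density integral_distr)
next
  assume "\<not> integrable lborel f" with c show ?thesis
    by (simp add: lborel_integrable_affine_eucl_iff not_integrable_integral_eq)
qed

lemma nn_integral_conv_tonelli:
  fixes G H :: "'a::euclidean_space \<Rightarrow> ennreal"
  assumes [measurable]: "G \<in> borel_measurable borel" "H \<in> borel_measurable borel"
  shows "(\<integral>\<^sup>+x. (\<integral>\<^sup>+y. G (x - y) * H y \<partial>lborel) \<partial>lborel) = (\<integral>\<^sup>+x. G x \<partial>lborel) * (\<integral>\<^sup>+y. H y \<partial>lborel)"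
proof -
  have "(\<integral>\<^sup>+x. (\<integral>\<^sup>+y. G (x - y) * H y \<partial>lborel) \<partial>lborel) = (\<integral>\<^sup>+y. (\<integral>\<^sup>+x. G (x - y) * H y \<partial>lborel) \<partial>lborel)"
    by (rule lborel_pair.Fubini'[symmetric]) measurable
  also have "\<dots> = (\<integral>\<^sup>+y. (\<integral>\<^sup>+x. G (x - y) \<partial>lborel) * H y \<partial>lborel)"
    by (simp add: nn_integral_multc)
  also have "\<dots> = (\<integral>\<^sup>+y. (\<integral>\<^sup>+x. G x \<partial>lborel) * H y \<partial>lborel)"
  proof -
    have "(\<integral>\<^sup>+x. G (x - y) \<partial>lborel) = (\<integral>\<^sup>+x. G x \<partial>lborel)" for y
      using nn_integral_translate_eucl[OF assms(1), of "-y"] by simp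
    then show ?thesis by simp
  qed
  also have "\<dots> = (\<integral>\<^sup>+x. G x \<partial>lborel) * (\<integral>\<^sup>+y. H y \<partial>lborel)"
    by (simp add: nn_integral_cmult)
  finally show ?thesis .
qed

definition shell :: "real \<Rightarrow> real \<Rightarrow> 'a::euclidean_space set" where
  "shell lo hi = {x. lo < norm x \<and> norm x \<le> hi}"

lemma shell_borel[measurable]: "shell lo hi \<in> sets borel"
  unfolding shell_def by measurable

lemma shell_dilate:
  fixes e :: real
  assumes c: "0 < c"
  shows "(\<integral>\<^sup>+x. ennreal (norm x powr e * indicator (shell (c*lo) (c*hi)) x) \<partial>(lborel::'a::euclidean_space measure))
    = ennreal (c ^ DIM('a) * c powr e) * (\<integral>\<^sup>+x. ennreal (norm x powr e * indicator (shell lo hi) x) \<partial>(lborel::'a measure))"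
proof -
  have "(\<integral>\<^sup>+x. ennreal (norm x powr e * indicator (shell (c*lo) (c*hi)) x) \<partial>(lborel::'a measure))
     = ennreal (\<bar>c\<bar> ^ DIM('a)) * (\<integral>\<^sup>+x. ennreal (norm (0 + c *\<^sub>R x) powr e * indicator (shell (c*lo) (c*hi)) (0 + c *\<^sub>R x)) \<partial>(lborel::'a measure))"
    using c by (intro nn_integral_affine_eucl) auto
  also have "(\<lambda>x::'a. ennreal (norm (0 + c *\<^sub>R x) powr e * indicator (shell (c*lo) (c*hi)) (0 + c *\<^sub>R x)))
      = (\<lambda>x. ennreal (c powr e) * ennreal (norm x powr e * indicator (shell lo hi) x))"
  proof
    fix x :: 'a
    have "indicator (shell (c*lo) (c*hi)) (c *\<^sub>R x) = (indicator (shell lo hi) x :: real)"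
      using c by (simp add: shell_def indicator_def)
    then show "ennreal (norm (0 + c *\<^sub>R x) powr e * indicator (shell (c*lo) (c*hi)) (0 + c *\<^sub>R x))
      = ennreal (c powr e) * ennreal (norm x powr e * indicator (shell lo hi) x)"
      using c by (simp add: powr_mult ennreal_mult[symmetric] mult.assoc)
  qed
  finally show ?thesis using c
    by (simp add: nn_integral_cmult ennreal_mult mult.assoc)
qed

lemma shell_finite:
  assumes "0 < lo"
  shows "(\<integral>\<^sup>+x. ennreal (norm x powr e * indicator (shell lo hi) x) \<partial>(lborel::'a::euclidean_space measure)) < top"
proof -
  have "(\<integral>\<^sup>+x. ennreal (norm x powr e * indicator (shell lo hi) x) \<partial>(lborel::'a measure))
      \<le> (\<integral>\<^sup>+x. ennreal (lo powr e + hi powr e) * indicator (cball 0 hi) x \<partial>(lborel::'a measure))"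
  proof (rule nn_integral_mono)
    fix x :: 'a
    show "ennreal (norm x powr e * indicator (shell lo hi) x) \<le> ennreal (lo powr e + hi powr e) * indicator (cball 0 hi) x"
    proof (cases "x \<in> shell lo hi")
      case True
      then have x: "lo < norm x" "norm x \<le> hi" by (auto simp: shell_def)
      have "norm x powr e \<le> lo powr e + hi powr e"
      proof (cases "0 \<le> e")
        case True
        then have "norm x powr e \<le> hi powr e" using x assms by (intro powr_mono2) auto
        then show ?thesis using powr_ge_zero[of lo e] by linarith
      next
        case False
        then have "norm x powr e \<le> lo powr e" using x assms by (intro powr_mono2') auto
        then show ?thesis using powr_ge_zero[of hi e] by linarith
      qed
      then show ?thesis using True x
        by (simp add: indicator_def ennreal_plus[symmetric] del: ennreal_plus)
    qed auto
  qed
  also have "\<dots> = ennreal (lo powr e + hi powr e) * emeasure lborel (cball (0::'a) hi)"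
    by (simp add: nn_integral_cmult_indicator)
  also have "\<dots> < top"
    using emeasure_lborel_cball_finite[of "0::'a" hi] by (simp add: ennreal_mult_less_top)
  finally show ?thesis .
qed

lemma ennreal_le_suminf: "(f k :: ennreal) \<le> (\<Sum>n. f n)"
  using sum_le_suminf[of f "{k}"] by (auto simp: summableI)

lemma inner_powr_finite:
  assumes a: "a < real DIM('a)"
  shows "(\<integral>\<^sup>+x. ennreal (norm x powr (-a) * indicator {x. norm x \<le> 1} x) \<partial>(lborel::'a::euclidean_space measure)) < top"
proof -
  define N where "N = real DIM('a)"
  define J where "J = (\<integral>\<^sup>+x. ennreal (norm x powr (-a) * indicator (shell (1/2) 1) x) \<partial>(lborel::'a measure))"
  have Jfin: "J < top" unfolding J_def by (rule shell_finite) simp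
  define r where "r = (1/2::real) powr (N - a)"
  have r: "0 < r" "r < 1" using a powr_less_mono'[of "1/2::real" 0 "N - a"] by (auto simp: r_def N_def)
  have sh: "shell ((1/2)^n * (1/2)) ((1/2)^n * 1) = shell ((1/2)^(Suc n)) ((1/2)^n)" for n
    by simp
  have Jn: "(\<integral>\<^sup>+x. ennreal (norm x powr (-a) * indicator (shell ((1/2)^(Suc n)) ((1/2)^n)) x) \<partial>(lborel::'a measure))
      = ennreal (r ^ n) * J" for n
  proof -
    have "(\<integral>\<^sup>+x. ennreal (norm x powr (-a) * indicator (shell ((1/2)^(Suc n)) ((1/2)^n)) x) \<partial>(lborel::'a measure))
       = ennreal (((1/2)^n) ^ DIM('a) * ((1/2)^n) powr (-a)) * J"
      unfolding J_def sh[symmetric] by (rule shell_dilate) simp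
    also have "((1/2::real)^n) ^ DIM('a) * ((1/2)^n) powr (-a) = r ^ n"
    proof -
      have h: "(1/2::real)^n = (1/2) powr real n" by (simp add: powr_realpow)
      have "((1/2::real)^n) ^ DIM('a) = ((1/2) powr real n) powr real DIM('a)"
        unfolding h by (simp add: powr_realpow)
      also have "\<dots> = (1/2) powr (real n * N)" by (simp add: powr_powr N_def)
      finally have 1: "((1/2::real)^n) ^ DIM('a) = (1/2) powr (real n * N)" .
      have 2: "((1/2::real)^n) powr (-a) = (1/2) powr (real n * (-a))"
        unfolding h by (simp add: powr_powr)
      have "r ^ n = ((1/2::real) powr (N - a)) powr real n" by (simp add: r_def powr_realpow)
      also have "\<dots> = (1/2) powr (real n * N + real n * (-a))" by (simp add: powr_powr algebra_simps)
      finally show ?thesis unfolding 1 2 by (simp add: powr_add[symmetric])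
    qed
    finally show ?thesis .
  qed
  have pt: "ennreal (norm x powr (-a) * indicator {x. norm x \<le> 1} x)
      \<le> (\<Sum>n. ennreal (norm x powr (-a) * indicator (shell ((1/2)^(Suc n)) ((1/2)^n)) x))" for x :: 'a
  proof (cases "x \<noteq> 0 \<and> norm x \<le> 1")
    case True
    then have nx: "0 < norm x" "norm x \<le> 1" by auto
    obtain k where k: "(1/2::real)^k < norm x" using real_arch_pow_inv[of "norm x" "1/2"] nx by auto
    define n where "n = (LEAST n. (1/2::real)^(Suc n) < norm x)"
    have n1: "(1/2::real)^(Suc n) < norm x"
      unfolding n_def by (rule LeastI[of _ k]) (use k in \<open>auto intro: less_le_trans\<close>)
    have n2: "norm x \<le> (1/2)^n"
    proof (cases n)
      case 0 then show ?thesis using nx by simp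
    next
      case (Suc j)
      then have "\<not> (1/2::real)^(Suc j) < norm x" unfolding n_def
        using not_less_Least[of j "\<lambda>n. (1/2::real)^(Suc n) < norm x"] Suc n_def by auto
      then show ?thesis using Suc by simp
    qed
    have "x \<in> shell ((1/2)^(Suc n)) ((1/2)^n)" using n1 n2 by (simp add: shell_def)
    then have "ennreal (norm x powr (-a) * indicator {x. norm x \<le> 1} x)
        = ennreal (norm x powr (-a) * indicator (shell ((1/2)^(Suc n)) ((1/2)^n)) x)"
      using nx by simp
    also have "\<dots> \<le> (\<Sum>n. ennreal (norm x powr (-a) * indicator (shell ((1/2)^(Suc n)) ((1/2)^n)) x))"
      by (rule ennreal_le_suminf)
    finally show ?thesis .
  next
    case False
    then show ?thesis by (auto simp: indicator_def)
  qed
  have "(\<integral>\<^sup>+x. ennreal (norm x powr (-a) * indicator {x. norm x \<le> 1} x) \<partial>(lborel::'a measure))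
      \<le> (\<integral>\<^sup>+x. (\<Sum>n. ennreal (norm x powr (-a) * indicator (shell ((1/2)^(Suc n)) ((1/2)^n)) x)) \<partial>(lborel::'a measure))"
    by (rule nn_integral_mono) (rule pt)
  also have "\<dots> = (\<Sum>n. (\<integral>\<^sup>+x. ennreal (norm x powr (-a) * indicator (shell ((1/2)^(Suc n)) ((1/2)^n)) x) \<partial>(lborel::'a measure)))"
    by (rule nn_integral_suminf) measurable
  also have "\<dots> = (\<Sum>n. ennreal (r ^ n)) * J" by (simp only: Jn ennreal_suminf_multc)
  also have "(\<Sum>n. ennreal (r ^ n)) = ennreal (1 / (1 - r))"
    using r by (intro suminf_ennreal_eq geometric_sums) auto
  also have "ennreal (1 / (1 - r)) * J < top" using Jfin by (simp add: ennreal_mult_less_top)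
  finally show ?thesis .
qed


lemma outer_powr_finite:
  assumes b: "real DIM('a) < b"
  shows "(\<integral>\<^sup>+x. ennreal (norm x powr (-b) * indicator {x. 1 < norm x} x) \<partial>(lborel::'a::euclidean_space measure)) < top"
proof -
  define N where "N = real DIM('a)"
  define J where "J = (\<integral>\<^sup>+x. ennreal (norm x powr (-b) * indicator (shell 1 2) x) \<partial>(lborel::'a measure))"
  have Jfin: "J < top" unfolding J_def by (rule shell_finite) simp
  define r where "r = (2::real) powr (N - b)"
  have r: "0 < r" "r < 1" using b powr_less_one[of "2::real" "N - b"] by (auto simp: r_def N_def)
  have sh: "shell ((2::real)^n * 1) ((2^n) * 2) = shell (2^n) (2^(Suc n))" for n
    by (simp add: mult.commute)
  have Jn: "(\<integral>\<^sup>+x. ennreal (norm x powr (-b) * indicator (shell (2^n) (2^(Suc n))) x) \<partial>(lborel::'a measure))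
      = ennreal (r ^ n) * J" for n
  proof -
    have "(\<integral>\<^sup>+x. ennreal (norm x powr (-b) * indicator (shell (2^n) (2^(Suc n))) x) \<partial>(lborel::'a measure))
       = ennreal (((2::real)^n) ^ DIM('a) * ((2::real)^n) powr (-b)) * J"
      unfolding J_def sh[symmetric] by (rule shell_dilate) simp
    also have "((2::real)^n) ^ DIM('a) * ((2::real)^n) powr (-b) = r ^ n"
    proof -
      have h: "(2::real)^n = 2 powr real n" by (simp add: powr_realpow)
      have "((2::real)^n) ^ DIM('a) = (2 powr real n) powr real DIM('a)"
        unfolding h by (simp add: powr_realpow)
      also have "\<dots> = 2 powr (real n * N)" by (simp add: powr_powr N_def)
      finally have 1: "((2::real)^n) ^ DIM('a) = 2 powr (real n * N)" .
      have 2: "((2::real)^n) powr (-b) = 2 powr (real n * (-b))"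
        unfolding h by (simp add: powr_powr)
      have "r ^ n = ((2::real) powr (N - b)) powr real n" by (simp add: r_def powr_realpow)
      also have "\<dots> = 2 powr (real n * N + real n * (-b))" by (simp add: powr_powr algebra_simps)
      finally show ?thesis unfolding 1 2 by (simp add: powr_add[symmetric])
    qed
    finally show ?thesis .
  qed
  have pt: "ennreal (norm x powr (-b) * indicator {x. 1 < norm x} x)
      \<le> (\<Sum>n. ennreal (norm x powr (-b) * indicator (shell (2^n) (2^(Suc n))) x))" for x :: 'a
  proof (cases "1 < norm x")
    case True
    obtain k where k: "norm x < (2::real)^k" using real_arch_pow[of 2 "norm x"] by auto
    define n where "n = (LEAST n. norm x \<le> (2::real)^(Suc n))"
    have n1: "norm x \<le> (2::real)^(Suc n)"
      unfolding n_def
    proof (rule LeastI[of _ k])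
      have "(2::real)^k \<le> 2^(Suc k)" by simp
      then show "norm x \<le> 2^(Suc k)" using k by linarith
    qed
    have n2: "(2::real)^n < norm x"
    proof (cases n)
      case 0 then show ?thesis using True by simp
    next
      case (Suc j)
      then have "\<not> norm x \<le> (2::real)^(Suc j)"
        using not_less_Least[of j "\<lambda>n. norm x \<le> (2::real)^(Suc n)"] Suc n_def by auto
      then show ?thesis using Suc by simp
    qed
    have "x \<in> shell (2^n) (2^(Suc n))" using n1 n2 by (simp add: shell_def)
    then have "ennreal (norm x powr (-b) * indicator {x. 1 < norm x} x)
        = ennreal (norm x powr (-b) * indicator (shell (2^n) (2^(Suc n))) x)"
      using True by simp
    also have "\<dots> \<le> (\<Sum>n. ennreal (norm x powr (-b) * indicator (shell (2^n) (2^(Suc n))) x))"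
      by (rule ennreal_le_suminf)
    finally show ?thesis .
  next
    case False
    then show ?thesis by (auto simp: indicator_def)
  qed
  have "(\<integral>\<^sup>+x. ennreal (norm x powr (-b) * indicator {x. 1 < norm x} x) \<partial>(lborel::'a measure))
      \<le> (\<integral>\<^sup>+x. (\<Sum>n. ennreal (norm x powr (-b) * indicator (shell (2^n) (2^(Suc n))) x)) \<partial>(lborel::'a measure))"
    by (rule nn_integral_mono) (rule pt)
  also have "\<dots> = (\<Sum>n. (\<integral>\<^sup>+x. ennreal (norm x powr (-b) * indicator (shell (2^n) (2^(Suc n))) x) \<partial>(lborel::'a measure)))"
    by (rule nn_integral_suminf) measurable
  also have "\<dots> = (\<Sum>n. ennreal (r ^ n)) * J" by (simp only: Jn ennreal_suminf_multc)
  also have "(\<Sum>n. ennreal (r ^ n)) = ennreal (1 / (1 - r))"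
    using r by (intro suminf_ennreal_eq geometric_sums) auto
  also have "ennreal (1 / (1 - r)) * J < top" using Jfin by (simp add: ennreal_mult_less_top)
  finally show ?thesis .
qed

lemma riesz_const_pos:
  assumes "0 < s" "s < real N" shows "0 < riesz_const N (s/2)"
  using assms unfolding riesz_const_def by (auto intro!: mult_pos_pos divide_pos_pos)

lemma riesz_kernel_eq:
  "riesz_kernel s (x::'a::euclidean_space) = riesz_const DIM('a) (s/2) * norm x powr (s - real DIM('a))"
  by (simp add: riesz_kernel_def)

lemma riesz_kernel_nonneg:
  assumes "0 < s" "s < real DIM('a)" shows "0 \<le> riesz_kernel s (x::'a::euclidean_space)"
  using riesz_const_pos[OF assms] by (simp add: riesz_kernel_eq)

lemma riesz_kernel_pos:
  assumes "0 < s" "s < real DIM('a)" "x \<noteq> 0" shows "0 < riesz_kernel s (x::'a::euclidean_space)"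
  using riesz_const_pos[OF assms(1,2)] assms(3) by (simp add: riesz_kernel_eq)

lemma riesz_kernel_measurable[measurable]: "riesz_kernel s \<in> borel_measurable borel"
  unfolding riesz_kernel_def by measurable

lemma riesz_kernel_dilate:
  assumes "0 < c"
  shows "riesz_kernel s (c *\<^sub>R x) = c powr (s - real DIM('a)) * riesz_kernel s (x::'a::euclidean_space)"
  using assms by (simp add: riesz_kernel_eq powr_mult)

lemma riesz_kernel_out_le:
  assumes "0 < s" "s < real DIM('a)" "1 < norm x"
  shows "riesz_kernel s (x::'a::euclidean_space) \<le> riesz_const DIM('a) (s/2)"
proof -
  have "norm x powr (s - real DIM('a)) \<le> 1"
    using assms powr_mono2'[of "s - real DIM('a)" 1 "norm x"] by auto
  then show ?thesis using riesz_const_pos[OF assms(1,2)]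
    by (simp add: riesz_kernel_eq mult_left_le)
qed

lemma riesz_kernel_powr:
  assumes "0 < s" "s < real DIM('a)" "0 < t"
  shows "riesz_kernel s (x::'a::euclidean_space) powr t
     = riesz_const DIM('a) (s/2) powr t * norm x powr (- ((real DIM('a) - s) * t))"
proof -
  have e: "(s - real DIM('a)) * t = - ((real DIM('a) - s) * t)" by (simp add: algebra_simps)
  show ?thesis using riesz_const_pos[OF assms(1,2)] assms
    by (cases "x = 0") (simp_all add: riesz_kernel_eq powr_mult powr_powr e)
qed

lemma kernel_in_finite:
  assumes "0 < s" "s < real DIM('a)" "0 < t" "(real DIM('a) - s) * t < real DIM('a)"
  shows "(\<integral>\<^sup>+x. ennreal (riesz_kernel s x powr t * indicator {x. norm x \<le> 1} x) \<partial>(lborel::'a::euclidean_space measure)) < top"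
proof -
  have "(\<integral>\<^sup>+x. ennreal (riesz_kernel s x powr t * indicator {x. norm x \<le> 1} x) \<partial>(lborel::'a measure))
     = (\<integral>\<^sup>+x. ennreal (riesz_const DIM('a) (s/2) powr t) * ennreal (norm x powr (- ((real DIM('a) - s) * t)) * indicator {x. norm x \<le> 1} x) \<partial>(lborel::'a measure))"
    using assms by (simp add: riesz_kernel_powr ennreal_mult[symmetric] mult.assoc)
  also have "\<dots> = ennreal (riesz_const DIM('a) (s/2) powr t) * (\<integral>\<^sup>+x. ennreal (norm x powr (- ((real DIM('a) - s) * t)) * indicator {x. norm x \<le> 1} x) \<partial>(lborel::'a measure))"
    by (rule nn_integral_cmult) measurable
  also have "\<dots> < top"
    using inner_powr_finite[of "(real DIM('a) - s) * t", where 'a='a] assms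
    by (simp add: ennreal_mult_less_top)
  finally show ?thesis .
qed

lemma kernel_out_finite:
  assumes "0 < s" "s < real DIM('a)" "0 < t" "real DIM('a) < (real DIM('a) - s) * t"
  shows "(\<integral>\<^sup>+x. ennreal (riesz_kernel s x powr t * indicator {x. 1 < norm x} x) \<partial>(lborel::'a::euclidean_space measure)) < top"
proof -
  have "(\<integral>\<^sup>+x. ennreal (riesz_kernel s x powr t * indicator {x. 1 < norm x} x) \<partial>(lborel::'a measure))
     = (\<integral>\<^sup>+x. ennreal (riesz_const DIM('a) (s/2) powr t) * ennreal (norm x powr (- ((real DIM('a) - s) * t)) * indicator {x. 1 < norm x} x) \<partial>(lborel::'a measure))"
    using assms by (simp add: riesz_kernel_powr ennreal_mult[symmetric] mult.assoc)
  also have "\<dots> = ennreal (riesz_const DIM('a) (s/2) powr t) * (\<integral>\<^sup>+x. ennreal (norm x powr (- ((real DIM('a) - s) * t)) * indicator {x. 1 < norm x} x) \<partial>(lborel::'a measure))"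
    by (rule nn_integral_cmult) measurable
  also have "\<dots> < top"
    using outer_powr_finite[of "(real DIM('a) - s) * t", where 'a='a] assms
    by (simp add: ennreal_mult_less_top)
  finally show ?thesis .
qed

definition Pf :: "real \<Rightarrow> real \<Rightarrow> ('a::euclidean_space \<Rightarrow> real) \<Rightarrow> ennreal" where
  "Pf s q \<rho> = (\<integral>\<^sup>+x. enn_powr (riesz_conv_nn s \<rho> x) q \<partial>lborel)"

definition dil :: "real \<Rightarrow> ('a::euclidean_space \<Rightarrow> real) \<Rightarrow> 'a \<Rightarrow> real" where
  "dil c \<rho> = (\<lambda>y. c ^ DIM('a) * \<rho> (c *\<^sub>R y))"

lemma riesz_conv_nn_measurable[measurable]:
  assumes [measurable]: "\<rho> \<in> borel_measurable borel"
  shows "riesz_conv_nn s \<rho> \<in> borel_measurable borel"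
  unfolding riesz_conv_nn_def[abs_def] by measurable

lemma riesz_conv_nn_mono:
  assumes "0 < s" "s < real DIM('a)" "\<And>y. \<rho> y \<le> \<sigma> y"
  shows "riesz_conv_nn s \<rho> x \<le> riesz_conv_nn s \<sigma> (x::'a::euclidean_space)"
  unfolding riesz_conv_nn_def
  using assms riesz_kernel_nonneg[OF assms(1,2)]
  by (intro nn_integral_mono ennreal_leI mult_left_mono) auto

lemma riesz_conv_nn_cmult:
  assumes "0 < s" "s < real DIM('a)" "0 \<le> a" and [measurable]: "\<rho> \<in> borel_measurable borel"
  shows "riesz_conv_nn s (\<lambda>y. a * \<rho> y) x = ennreal a * riesz_conv_nn s \<rho> (x::'a::euclidean_space)"
proof -
  have "(\<lambda>y. ennreal (riesz_kernel s (x - y) * (a * \<rho> y))) = (\<lambda>y. ennreal a * ennreal (riesz_kernel s (x - y) * \<rho> y))"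
    using assms by (auto simp: ennreal_mult'[symmetric] algebra_simps)
  then show ?thesis unfolding riesz_conv_nn_def
    by (simp add: nn_integral_cmult)
qed

lemma riesz_conv_nn_translate:
  assumes [measurable]: "\<rho> \<in> borel_measurable borel"
  shows "riesz_conv_nn s (\<lambda>y. \<rho> (y + t)) x = riesz_conv_nn s \<rho> (x + t :: 'a::euclidean_space)"
proof -
  have "riesz_conv_nn s \<rho> (x + t) = (\<integral>\<^sup>+y. ennreal (riesz_kernel s (x + t - (y + t)) * \<rho> (y + t)) \<partial>lborel)"
    unfolding riesz_conv_nn_def
    by (rule nn_integral_translate_eucl[symmetric, of "\<lambda>y. ennreal (riesz_kernel s (x + t - y) * \<rho> y)"]) measurable
  then show ?thesis unfolding riesz_conv_nn_def by simp
qed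

lemma riesz_conv_nn_dilate:
  assumes "0 < s" "s < real DIM('a)" "0 < c" and [measurable]: "\<rho> \<in> borel_measurable borel"
  shows "riesz_conv_nn s (dil c \<rho>) x = ennreal (c powr (real DIM('a) - s)) * riesz_conv_nn s \<rho> (c *\<^sub>R x :: 'a::euclidean_space)"
proof -
  define X where "X = (\<integral>\<^sup>+y. ennreal (riesz_kernel s (x - y) * \<rho> (c *\<^sub>R y)) \<partial>(lborel::'a measure))"
  have L: "riesz_conv_nn s (dil c \<rho>) x = ennreal (c ^ DIM('a)) * X"
  proof -
    have "(\<lambda>y. ennreal (riesz_kernel s (x - y) * dil c \<rho> y)) = (\<lambda>y. ennreal (c ^ DIM('a)) * ennreal (riesz_kernel s (x - y) * \<rho> (c *\<^sub>R y)))"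
      using assms by (auto simp: dil_def ennreal_mult'[symmetric] algebra_simps)
    then show ?thesis unfolding riesz_conv_nn_def X_def by (simp add: nn_integral_cmult)
  qed
  have "riesz_conv_nn s \<rho> (c *\<^sub>R x) = ennreal (\<bar>c\<bar> ^ DIM('a)) *
      (\<integral>\<^sup>+y. ennreal (riesz_kernel s (c *\<^sub>R x - (0 + c *\<^sub>R y)) * \<rho> (0 + c *\<^sub>R y)) \<partial>(lborel::'a measure))"
    unfolding riesz_conv_nn_def using assms
    by (intro nn_integral_affine_eucl[of "\<lambda>y. ennreal (riesz_kernel s (c *\<^sub>R x - y) * \<rho> y)"]) auto
  also have "(\<lambda>y. ennreal (riesz_kernel s (c *\<^sub>R x - (0 + c *\<^sub>R y)) * \<rho> (0 + c *\<^sub>R y)))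
     = (\<lambda>y. ennreal (c powr (s - real DIM('a))) * ennreal (riesz_kernel s (x - y) * \<rho> (c *\<^sub>R y)))"
  proof
    fix y :: 'a
    have "c *\<^sub>R x - (0 + c *\<^sub>R y) = c *\<^sub>R (x - y)" by (simp add: algebra_simps)
    then show "ennreal (riesz_kernel s (c *\<^sub>R x - (0 + c *\<^sub>R y)) * \<rho> (0 + c *\<^sub>R y))
       = ennreal (c powr (s - real DIM('a))) * ennreal (riesz_kernel s (x - y) * \<rho> (c *\<^sub>R y))"
      using assms by (simp add: riesz_kernel_dilate ennreal_mult'[symmetric] mult.assoc)
  qed
  also have "(\<integral>\<^sup>+y. ennreal (c powr (s - real DIM('a))) * ennreal (riesz_kernel s (x - y) * \<rho> (c *\<^sub>R y)) \<partial>(lborel::'a measure))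
     = ennreal (c powr (s - real DIM('a))) * X"
    unfolding X_def by (simp add: nn_integral_cmult)
  finally have R: "riesz_conv_nn s \<rho> (c *\<^sub>R x) = ennreal (c ^ DIM('a)) * (ennreal (c powr (s - real DIM('a))) * X)"
    using assms by simp
  have "ennreal (c powr (real DIM('a) - s)) * ennreal (c powr (s - real DIM('a))) = 1"
    using assms by (simp add: ennreal_mult[symmetric] powr_add[symmetric])
  then show ?thesis unfolding L R
    by (metis (no_types, lifting) mult.assoc mult.left_commute mult_1)
qed

lemma nn_integral_dilate_inv:
  fixes g :: "'a::euclidean_space \<Rightarrow> ennreal"
  assumes [measurable]: "g \<in> borel_measurable borel" and c: "0 < c"
  shows "(\<integral>\<^sup>+x. g (c *\<^sub>R x) \<partial>lborel) = ennreal (c powr (- real DIM('a))) * (\<integral>\<^sup>+x. g x \<partial>lborel)"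
proof -
  have "(\<integral>\<^sup>+x. g x \<partial>lborel) = ennreal (\<bar>c\<bar> ^ DIM('a)) * (\<integral>\<^sup>+x. g (0 + c *\<^sub>R x) \<partial>lborel)"
    using c by (intro nn_integral_affine_eucl) auto
  then have "ennreal (c powr (- real DIM('a))) * (\<integral>\<^sup>+x. g x \<partial>lborel)
     = ennreal (c powr (- real DIM('a))) * ennreal (c ^ DIM('a)) * (\<integral>\<^sup>+x. g (c *\<^sub>R x) \<partial>lborel)"
    using c by (simp add: mult.assoc)
  also have "ennreal (c powr (- real DIM('a))) * ennreal (c ^ DIM('a)) = 1"
    using c by (simp add: ennreal_mult[symmetric] powr_realpow[symmetric] powr_add[symmetric])
  finally show ?thesis by simp
qed

lemma Pf_dilate:
  assumes "0 < s" "s < real DIM('a)" "0 < c" "0 < q" and [measurable]: "\<rho> \<in> borel_measurable borel"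
  shows "Pf s q (dil c \<rho> :: 'a::euclidean_space \<Rightarrow> real)
     = ennreal (c powr ((real DIM('a) - s) * q - real DIM('a))) * Pf s q \<rho>"
proof -
  have "Pf s q (dil c \<rho> :: 'a \<Rightarrow> real)
      = (\<integral>\<^sup>+x. ennreal (c powr ((real DIM('a) - s) * q)) * enn_powr (riesz_conv_nn s \<rho> (c *\<^sub>R x)) q \<partial>(lborel::'a measure))"
    unfolding Pf_def using assms
    by (simp add: riesz_conv_nn_dilate enn_powr_mult powr_powr)
  also have "\<dots> = ennreal (c powr ((real DIM('a) - s) * q)) * (\<integral>\<^sup>+x. enn_powr (riesz_conv_nn s \<rho> (c *\<^sub>R x)) q \<partial>(lborel::'a measure))"
    by (rule nn_integral_cmult) measurable
  also have "(\<integral>\<^sup>+x. enn_powr (riesz_conv_nn s \<rho> (c *\<^sub>R x)) q \<partial>(lborel::'a measure))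
     = ennreal (c powr (- real DIM('a))) * Pf s q \<rho>"
    unfolding Pf_def using nn_integral_dilate_inv[of "\<lambda>x. enn_powr (riesz_conv_nn s \<rho> x) q" c] assms(3) by simp
  finally show ?thesis using assms
    by (simp add: mult.assoc[symmetric] ennreal_mult[symmetric] powr_add[symmetric])
qed

lemma Pf_translate:
  assumes [measurable]: "\<rho> \<in> borel_measurable borel"
  shows "Pf s q (\<lambda>y. \<rho> (y + t)) = Pf s q (\<rho> :: 'a::euclidean_space \<Rightarrow> real)"
  unfolding Pf_def riesz_conv_nn_translate[OF assms]
  by (rule nn_integral_translate_eucl[of "\<lambda>x. enn_powr (riesz_conv_nn s \<rho> x) q"]) measurable

lemma Pf_cmult:
  assumes "0 < s" "s < real DIM('a)" "0 \<le> a" "0 < q" and [measurable]: "\<rho> \<in> borel_measurable borel"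
  shows "Pf s q (\<lambda>y. a * \<rho> y) = ennreal (a powr q) * Pf s q (\<rho> :: 'a::euclidean_space \<Rightarrow> real)"
  unfolding Pf_def using assms
  by (simp add: riesz_conv_nn_cmult enn_powr_mult nn_integral_cmult)

lemma riesz_conv_nn_pos:
  assumes "0 < s" "s < real DIM('a)" and [measurable]: "\<rho> \<in> borel_measurable borel"
    and nn: "\<And>y. 0 \<le> \<rho> y" and nz: "\<not> (AE y in lborel. \<rho> y = 0)"
  shows "0 < riesz_conv_nn s \<rho> (x :: 'a::euclidean_space)"
proof (rule ccontr)
  assume "\<not> 0 < riesz_conv_nn s \<rho> x"
  then have "riesz_conv_nn s \<rho> x = 0" by (simp add: zero_less_iff_neq_zero)
  then have "AE y in lborel. ennreal (riesz_kernel s (x - y) * \<rho> y) = 0"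
    unfolding riesz_conv_nn_def by (subst (asm) nn_integral_0_iff_AE) auto
  moreover have "AE y in lborel. y \<noteq> x" by (rule AE_lborel_singleton)
  ultimately have "AE y in lborel. \<rho> y = 0"
  proof eventually_elim
    case (elim y)
    then have "0 < riesz_kernel s (x - y)" using assms by (intro riesz_kernel_pos) auto
    then show ?case using elim nn[of y]
      by (auto simp: ennreal_eq_0_iff mult_le_0_iff)
  qed
  then show False using nz by simp
qed

lemma Pf_pos:
  assumes "0 < s" "s < real DIM('a)" and [measurable]: "\<rho> \<in> borel_measurable borel"
    and nn: "\<And>y. 0 \<le> \<rho> y" and nz: "\<not> (AE y in lborel. \<rho> y = 0)"
  shows "0 < Pf s q (\<rho> :: 'a::euclidean_space \<Rightarrow> real)"
proof (rule ccontr)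
  assume "\<not> 0 < Pf s q \<rho>"
  then have "Pf s q \<rho> = 0" by (simp add: zero_less_iff_neq_zero)
  then have ae: "AE x in lborel. enn_powr (riesz_conv_nn s \<rho> x) q = 0"
    unfolding Pf_def by (subst (asm) nn_integral_0_iff_AE) auto
  have pos: "0 < enn_powr (riesz_conv_nn s \<rho> x) q" for x :: 'a
    by (rule enn_powr_pos, rule riesz_conv_nn_pos) (use assms in auto)
  from ae have "AE x in (lborel::'a measure). False"
  proof eventually_elim
    case (elim x) then show ?case using pos[of x] by simp
  qed
  then have "ae_filter (lborel::'a measure) = bot" using trivial_limit_def by blast
  then show False by (simp add: ae_filter_eq_bot_iff emeasure_lborel_UNIV)
qed

lemma enn_powr_mult_self:
  assumes "0 < q" shows "enn_powr a q * a = enn_powr a (q + 1)"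
proof (cases "a = top")
  case True then show ?thesis by (simp add: enn_powr_eq_top_iff)
next
  case False
  then obtain x where x: "a = ennreal x" "0 \<le> x" by (cases a) auto
  then show ?thesis using assms
    by (cases "x = 0") (simp_all add: ennreal_mult[symmetric] powr_add)
qed

lemma enn_powr_mult_self':
  assumes "0 < q" "0 < r" shows "enn_powr a q * enn_powr a r = enn_powr a (q + r)"
proof (cases "a = top")
  case True then show ?thesis
    using assms by (simp add: enn_powr_eq_top_iff)
next
  case False
  then obtain x where x: "a = ennreal x" "0 \<le> x" by (cases a) auto
  then show ?thesis using assms
    by (cases "x = 0") (simp_all add: ennreal_mult[symmetric] powr_add)
qed

lemma jensen_pt:
  fixes k r :: "'b \<Rightarrow> real"
  assumes [measurable]: "k \<in> borel_measurable M" "r \<in> borel_measurable M"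
    and nk: "\<And>y. 0 \<le> k y" and nr: "\<And>y. 0 \<le> r y" and q: "1 < q"
  shows "enn_powr (\<integral>\<^sup>+y. ennreal (k y * r y) \<partial>M) q
    \<le> (\<integral>\<^sup>+y. ennreal (k y powr q * r y) \<partial>M) * enn_powr (\<integral>\<^sup>+y. ennreal (r y) \<partial>M) (q - 1)"
proof -
  define \<theta> where "\<theta> = 1 / q"
  have th: "0 < \<theta>" "\<theta> < 1" using q by (auto simp: \<theta>_def)
  have pt: "k y * r y = (k y powr q * r y) powr \<theta> * r y powr (1 - \<theta>)" for y
  proof (cases "k y = 0 \<or> r y = 0")
    case True then show ?thesis using th by auto
  next
    case False
    then have "0 < k y" "0 < r y" using nk[of y] nr[of y] by auto
    then show ?thesis using q
      by (simp add: powr_mult powr_powr \<theta>_def mult.assoc powr_add[symmetric])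
  qed
  have "(\<integral>\<^sup>+y. ennreal (k y * r y) \<partial>M)
      = (\<integral>\<^sup>+y. ennreal ((k y powr q * r y) powr \<theta> * r y powr (1 - \<theta>)) \<partial>M)"
    by (simp only: pt)
  also have "\<dots> \<le> enn_powr (\<integral>\<^sup>+y. ennreal (k y powr q * r y) \<partial>M) \<theta> * enn_powr (\<integral>\<^sup>+y. ennreal (r y) \<partial>M) (1 - \<theta>)"
    by (rule holder_log) (use nk nr th in auto)
  finally have "enn_powr (\<integral>\<^sup>+y. ennreal (k y * r y) \<partial>M) q
      \<le> enn_powr (enn_powr (\<integral>\<^sup>+y. ennreal (k y powr q * r y) \<partial>M) \<theta> * enn_powr (\<integral>\<^sup>+y. ennreal (r y) \<partial>M) (1 - \<theta>)) q"
    using q by (intro enn_powr_mono) auto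
  also have "\<dots> = (\<integral>\<^sup>+y. ennreal (k y powr q * r y) \<partial>M) * enn_powr (\<integral>\<^sup>+y. ennreal (r y) \<partial>M) (q - 1)"
    using q th by (simp add: enn_powr_mult enn_powr_powr \<theta>_def algebra_simps)
  finally show ?thesis .
qed

lemma young_pt:
  fixes k r :: "'b \<Rightarrow> real"
  assumes [measurable]: "k \<in> borel_measurable M" "r \<in> borel_measurable M"
    and nk: "\<And>y. 0 \<le> k y" and nr: "\<And>y. 0 \<le> r y"
    and t: "1 < t" "t < q" and m1: "1 < m1" "m1 < q" and rel: "1/t + 1/m1 = 1 + 1/q"
  shows "enn_powr (\<integral>\<^sup>+y. ennreal (k y * r y) \<partial>M) q
    \<le> (\<integral>\<^sup>+y. ennreal (k y powr t * r y powr m1) \<partial>M)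
       * enn_powr (\<integral>\<^sup>+y. ennreal (k y powr t) \<partial>M) (q/t - 1)
       * enn_powr (\<integral>\<^sup>+y. ennreal (r y powr m1) \<partial>M) (q/m1 - 1)"
proof -
  have q: "1 < q" using t by simp
  define \<theta> where "\<theta> = 1 / q"
  define \<gamma> where "\<gamma> = 1/t - 1/q"
  define \<delta> where "\<delta> = 1/m1 - 1/q"
  have th: "0 < \<theta>" "\<theta> < 1" using q by (auto simp: \<theta>_def)
  have gp: "0 < \<gamma>" using t by (simp add: \<gamma>_def frac_less2)
  have dp: "0 < \<delta>" using m1 by (simp add: \<delta>_def frac_less2)
  have gd: "\<gamma> + \<delta> = 1 - \<theta>" using rel by (simp add: \<gamma>_def \<delta>_def \<theta>_def)
  define g' where "g' = \<gamma> / (1 - \<theta>)"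
  have g': "0 < g'" "g' < 1" "1 - g' = \<delta> / (1 - \<theta>)"
    using gp dp gd th by (auto simp: g'_def field_simps)
  define f where "f y = k y powr t * r y powr m1" for y
  define g where "g y = (k y powr t) powr g' * (r y powr m1) powr (1 - g')" for y
  have [measurable]: "f \<in> borel_measurable M"
    unfolding f_def[abs_def] by measurable
  have [measurable]: "g \<in> borel_measurable M"
    unfolding g_def[abs_def] by measurable
  have nf: "0 \<le> f y" "0 \<le> g y" for y by (simp_all add: f_def g_def)
  have pt: "k y * r y = f y powr \<theta> * g y powr (1 - \<theta>)" for y
  proof (cases "k y = 0 \<or> r y = 0")
    case True then show ?thesis using th g' by (auto simp: f_def g_def)
  next
    case False
    then have kp: "0 < k y" and rp: "0 < r y" using nk[of y] nr[of y] by auto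
    have a1: "g' * (1 - \<theta>) = \<gamma>" using th by (simp add: g'_def)
    have a2: "(1 - g') * (1 - \<theta>) = \<delta>" using th g'(3) by simp
    have e1: "t * \<theta> + t * g' * (1 - \<theta>) = 1"
      using t unfolding mult.assoc a1 by (simp add: \<gamma>_def \<theta>_def algebra_simps)
    have e2: "m1 * \<theta> + m1 * (1 - g') * (1 - \<theta>) = 1"
      using m1 unfolding mult.assoc a2 by (simp add: \<delta>_def \<theta>_def algebra_simps)
    have "f y powr \<theta> * g y powr (1 - \<theta>)
        = k y powr (t * \<theta> + t * g' * (1 - \<theta>)) * r y powr (m1 * \<theta> + m1 * (1 - g') * (1 - \<theta>))"
      using kp rp by (simp add: f_def g_def powr_mult powr_powr powr_add mult_ac)
    then show ?thesis using e1 e2 kp rp by simp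
  qed
  define IF where "IF = (\<integral>\<^sup>+y. ennreal (f y) \<partial>M)"
  define IG where "IG = (\<integral>\<^sup>+y. ennreal (g y) \<partial>M)"
  define KT where "KT = (\<integral>\<^sup>+y. ennreal (k y powr t) \<partial>M)"
  define RM where "RM = (\<integral>\<^sup>+y. ennreal (r y powr m1) \<partial>M)"
  have "(\<integral>\<^sup>+y. ennreal (k y * r y) \<partial>M) = (\<integral>\<^sup>+y. ennreal (f y powr \<theta> * g y powr (1 - \<theta>)) \<partial>M)"
    by (simp only: pt)
  also have "\<dots> \<le> enn_powr IF \<theta> * enn_powr IG (1 - \<theta>)"
    unfolding IF_def IG_def by (rule holder_log) (use nf th in auto)
  finally have s1: "enn_powr (\<integral>\<^sup>+y. ennreal (k y * r y) \<partial>M) q \<le> IF * enn_powr IG ((1 - \<theta>) * q)"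
    using q th enn_powr_mono[of q "(\<integral>\<^sup>+y. ennreal (k y * r y) \<partial>M)" "enn_powr IF \<theta> * enn_powr IG (1 - \<theta>)"]
    by (simp add: enn_powr_mult enn_powr_powr \<theta>_def)
  have "IG \<le> enn_powr KT g' * enn_powr RM (1 - g')"
    unfolding IG_def KT_def RM_def g_def by (rule holder_log) (use g' in auto)
  then have "enn_powr IG ((1 - \<theta>) * q) \<le> enn_powr (enn_powr KT g' * enn_powr RM (1 - g')) ((1 - \<theta>) * q)"
    using th q by (intro enn_powr_mono) auto
  also have "\<dots> = enn_powr KT (g' * ((1 - \<theta>) * q)) * enn_powr RM ((1 - g') * ((1 - \<theta>) * q))"
    using th q g' by (simp add: enn_powr_mult enn_powr_powr)
  also have "g' * ((1 - \<theta>) * q) = q/t - 1"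
  proof -
    have "g' * ((1 - \<theta>) * q) = \<gamma> * q" using th by (simp add: g'_def)
    then show ?thesis using q by (simp add: \<gamma>_def algebra_simps)
  qed
  also have "(1 - g') * ((1 - \<theta>) * q) = q/m1 - 1"
  proof -
    have "(1 - g') * ((1 - \<theta>) * q) = \<delta> * q" using th g'(3) by simp
    then show ?thesis using q by (simp add: \<delta>_def algebra_simps)
  qed
  finally have s2: "enn_powr IG ((1 - \<theta>) * q) \<le> enn_powr KT (q/t - 1) * enn_powr RM (q/m1 - 1)" .
  have "enn_powr (\<integral>\<^sup>+y. ennreal (k y * r y) \<partial>M) q \<le> IF * (enn_powr KT (q/t - 1) * enn_powr RM (q/m1 - 1))"
    using s1 s2 by (meson mult_left_mono order_trans zero_le)
  then show ?thesis unfolding IF_def KT_def RM_def f_def by (simp add: mult.assoc)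
qed

lemma nn_integral_reflect_eucl:
  fixes g :: "'a::euclidean_space \<Rightarrow> ennreal"
  assumes [measurable]: "g \<in> borel_measurable borel"
  shows "(\<integral>\<^sup>+y. g (x - y) \<partial>lborel) = (\<integral>\<^sup>+y. g y \<partial>lborel)"
  using nn_integral_affine_eucl[OF assms, of "-1" x] by simp

lemma young_conv:
  fixes G \<rho> :: "'a::euclidean_space \<Rightarrow> real"
  assumes [measurable]: "G \<in> borel_measurable borel" "\<rho> \<in> borel_measurable borel"
    and nG: "\<And>y. 0 \<le> G y" and nr: "\<And>y. 0 \<le> \<rho> y"
    and t: "1 < t" "t < q" and m1: "1 < m1" "m1 < q" and rel: "1/t + 1/m1 = 1 + 1/q"
  shows "(\<integral>\<^sup>+x. enn_powr (\<integral>\<^sup>+y. ennreal (G (x - y) * \<rho> y) \<partial>lborel) q \<partial>lborel)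
    \<le> enn_powr (\<integral>\<^sup>+y. ennreal (G y powr t) \<partial>lborel) (q/t) * enn_powr (\<integral>\<^sup>+y. ennreal (\<rho> y powr m1) \<partial>lborel) (q/m1)"
proof -
  define KT where "KT = (\<integral>\<^sup>+y. ennreal (G y powr t) \<partial>(lborel::'a measure))"
  define RM where "RM = (\<integral>\<^sup>+y. ennreal (\<rho> y powr m1) \<partial>(lborel::'a measure))"
  have refl: "(\<integral>\<^sup>+y. ennreal (G (x - y) powr t) \<partial>lborel) = KT" for x
    unfolding KT_def by (rule nn_integral_reflect_eucl[of "\<lambda>y. ennreal (G y powr t)"]) measurable
  have pt: "enn_powr (\<integral>\<^sup>+y. ennreal (G (x - y) * \<rho> y) \<partial>lborel) q
     \<le> (\<integral>\<^sup>+y. ennreal (G (x - y) powr t) * ennreal (\<rho> y powr m1) \<partial>lborel) * (enn_powr KT (q/t - 1) * enn_powr RM (q/m1 - 1))" for x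
  proof -
    have "enn_powr (\<integral>\<^sup>+y. ennreal (G (x - y) * \<rho> y) \<partial>lborel) q
      \<le> (\<integral>\<^sup>+y. ennreal (G (x - y) powr t * \<rho> y powr m1) \<partial>lborel)
       * enn_powr (\<integral>\<^sup>+y. ennreal (G (x - y) powr t) \<partial>lborel) (q/t - 1)
       * enn_powr (\<integral>\<^sup>+y. ennreal (\<rho> y powr m1) \<partial>lborel) (q/m1 - 1)"
      by (rule young_pt[where k="\<lambda>y. G (x - y)" and r=\<rho>]) (use assms in auto)
    then show ?thesis unfolding refl RM_def by (simp add: ennreal_mult mult.assoc)
  qed
  have "(\<integral>\<^sup>+x. enn_powr (\<integral>\<^sup>+y. ennreal (G (x - y) * \<rho> y) \<partial>lborel) q \<partial>lborel)
     \<le> (\<integral>\<^sup>+x. (\<integral>\<^sup>+y. ennreal (G (x - y) powr t) * ennreal (\<rho> y powr m1) \<partial>lborel) * (enn_powr KT (q/t - 1) * enn_powr RM (q/m1 - 1)) \<partial>lborel)"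
    by (rule nn_integral_mono) (rule pt)
  also have "\<dots> = (\<integral>\<^sup>+x. (\<integral>\<^sup>+y. ennreal (G (x - y) powr t) * ennreal (\<rho> y powr m1) \<partial>lborel) \<partial>lborel) * (enn_powr KT (q/t - 1) * enn_powr RM (q/m1 - 1))"
    by (rule nn_integral_multc) measurable
  also have "(\<integral>\<^sup>+x. (\<integral>\<^sup>+y. ennreal (G (x - y) powr t) * ennreal (\<rho> y powr m1) \<partial>lborel) \<partial>lborel) = KT * RM"
    unfolding KT_def RM_def
    by (rule nn_integral_conv_tonelli[of "\<lambda>y. ennreal (G y powr t)" "\<lambda>y. ennreal (\<rho> y powr m1)"]) measurable
  also have "KT * RM * (enn_powr KT (q/t - 1) * enn_powr RM (q/m1 - 1))
      = (enn_powr KT (q/t - 1) * KT) * (enn_powr RM (q/m1 - 1) * RM)"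
    by (simp add: mult_ac)
  also have "\<dots> = enn_powr KT (q/t) * enn_powr RM (q/m1)"
    using t m1 by (simp add: enn_powr_mult_self)
  finally show ?thesis unfolding KT_def RM_def .
qed

lemma jensen_conv:
  fixes G \<rho> :: "'a::euclidean_space \<Rightarrow> real"
  assumes [measurable]: "G \<in> borel_measurable borel" "\<rho> \<in> borel_measurable borel"
    and nG: "\<And>y. 0 \<le> G y" and nr: "\<And>y. 0 \<le> \<rho> y" and q: "1 < q"
  shows "(\<integral>\<^sup>+x. enn_powr (\<integral>\<^sup>+y. ennreal (G (x - y) * \<rho> y) \<partial>lborel) q \<partial>lborel)
    \<le> (\<integral>\<^sup>+y. ennreal (G y powr q) \<partial>lborel) * enn_powr (\<integral>\<^sup>+y. ennreal (\<rho> y) \<partial>lborel) q"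
proof -
  define KQ where "KQ = (\<integral>\<^sup>+y. ennreal (G y powr q) \<partial>(lborel::'a measure))"
  define R1 where "R1 = (\<integral>\<^sup>+y. ennreal (\<rho> y) \<partial>(lborel::'a measure))"
  have pt: "enn_powr (\<integral>\<^sup>+y. ennreal (G (x - y) * \<rho> y) \<partial>lborel) q
     \<le> (\<integral>\<^sup>+y. ennreal (G (x - y) powr q) * ennreal (\<rho> y) \<partial>lborel) * enn_powr R1 (q - 1)" for x
  proof -
    have "enn_powr (\<integral>\<^sup>+y. ennreal (G (x - y) * \<rho> y) \<partial>lborel) q
      \<le> (\<integral>\<^sup>+y. ennreal (G (x - y) powr q * \<rho> y) \<partial>lborel) * enn_powr (\<integral>\<^sup>+y. ennreal (\<rho> y) \<partial>lborel) (q - 1)"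
      by (rule jensen_pt[where k="\<lambda>y. G (x - y)" and r=\<rho>]) (use assms in auto)
    then show ?thesis unfolding R1_def by (simp add: ennreal_mult')
  qed
  have "(\<integral>\<^sup>+x. enn_powr (\<integral>\<^sup>+y. ennreal (G (x - y) * \<rho> y) \<partial>lborel) q \<partial>lborel)
     \<le> (\<integral>\<^sup>+x. (\<integral>\<^sup>+y. ennreal (G (x - y) powr q) * ennreal (\<rho> y) \<partial>lborel) * enn_powr R1 (q - 1) \<partial>lborel)"
    by (rule nn_integral_mono) (rule pt)
  also have "\<dots> = (\<integral>\<^sup>+x. (\<integral>\<^sup>+y. ennreal (G (x - y) powr q) * ennreal (\<rho> y) \<partial>lborel) \<partial>lborel) * enn_powr R1 (q - 1)"
    by (rule nn_integral_multc) measurable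
  also have "(\<integral>\<^sup>+x. (\<integral>\<^sup>+y. ennreal (G (x - y) powr q) * ennreal (\<rho> y) \<partial>lborel) \<partial>lborel) = KQ * R1"
    unfolding KQ_def R1_def
    by (rule nn_integral_conv_tonelli[of "\<lambda>y. ennreal (G y powr q)" "\<lambda>y. ennreal (\<rho> y)"]) measurable
  also have "KQ * R1 * enn_powr R1 (q - 1) = KQ * (enn_powr R1 (q - 1) * R1)"
    by (simp add: mult_ac)
  also have "\<dots> = KQ * enn_powr R1 q"
    using q by (simp add: enn_powr_mult_self)
  finally show ?thesis unfolding KQ_def R1_def .
qed

definition K1 :: "real \<Rightarrow> 'a::euclidean_space \<Rightarrow> real" where
  "K1 s y = riesz_kernel s y * indicator {y. norm y \<le> 1} y"
definition K2 :: "real \<Rightarrow> 'a::euclidean_space \<Rightarrow> real" where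
  "K2 s y = riesz_kernel s y * indicator {y. 1 < norm y} y"

lemma K12_measurable[measurable]: "K1 s \<in> borel_measurable borel" "K2 s \<in> borel_measurable borel"
  unfolding K1_def[abs_def] K2_def[abs_def] by measurable measurable

lemma K12_sum: "riesz_kernel s (y::'a::euclidean_space) = K1 s y + K2 s y"
  by (auto simp: K1_def K2_def indicator_def)

lemma K12_nonneg: "0 < s \<Longrightarrow> s < real DIM('a) \<Longrightarrow> 0 \<le> K1 s (y::'a::euclidean_space) \<and> 0 \<le> K2 s y"
  using riesz_kernel_nonneg[of s y] by (auto simp: K1_def K2_def)

lemma K1_powr: "0 < t \<Longrightarrow> K1 s (y::'a::euclidean_space) powr t = riesz_kernel s y powr t * indicator {y. norm y \<le> 1} y"
  by (auto simp: K1_def indicator_def)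
lemma K2_powr: "0 < t \<Longrightarrow> K2 s (y::'a::euclidean_space) powr t = riesz_kernel s y powr t * indicator {y. 1 < norm y} y"
  by (auto simp: K2_def indicator_def)

lemma conv_split:
  assumes "0 < s" "s < real DIM('a)" and [measurable]: "\<rho> \<in> borel_measurable borel" and nn: "\<And>y. 0 \<le> \<rho> y"
  shows "riesz_conv_nn s \<rho> (x::'a::euclidean_space) = (\<integral>\<^sup>+y. ennreal (K1 s (x - y) * \<rho> y) \<partial>lborel) + (\<integral>\<^sup>+y. ennreal (K2 s (x - y) * \<rho> y) \<partial>lborel)"
    (is "_ = ?A + ?B")
proof -
  have "riesz_conv_nn s \<rho> x = (\<integral>\<^sup>+y. ennreal (K1 s (x - y) * \<rho> y) + ennreal (K2 s (x - y) * \<rho> y) \<partial>(lborel::'a measure))"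
    unfolding riesz_conv_nn_def
  proof (intro nn_integral_cong)
    fix y :: 'a
    have "0 \<le> K1 s (x - y) * \<rho> y" "0 \<le> K2 s (x - y) * \<rho> y"
      using K12_nonneg[OF assms(1,2), of "x - y"] nn[of y] by auto
    then show "ennreal (riesz_kernel s (x - y) * \<rho> y) = ennreal (K1 s (x - y) * \<rho> y) + ennreal (K2 s (x - y) * \<rho> y)"
      by (simp add: K12_sum[of s "x - y"] distrib_right ennreal_plus)
  qed
  also have "\<dots> = ?A + ?B" by (rule nn_integral_add) measurable
  finally show ?thesis .
qed

lemma interaction_bound:
  fixes \<rho> :: "'a::euclidean_space \<Rightarrow> real"
  assumes s: "0 < s" "s < real DIM('a)" and q: "1 < q" and qN: "real DIM('a) < (real DIM('a) - s) * q"
    and t: "1 < t" "t < q" and tN: "(real DIM('a) - s) * t < real DIM('a)"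
    and m1: "1 < m1" "m1 < q" "m1 < m" and rel: "1/t + 1/m1 = 1 + 1/q"
    and [measurable]: "\<rho> \<in> borel_measurable borel" and nn: "\<And>y. 0 \<le> \<rho> y"
    and M0: "(\<integral>\<^sup>+y. ennreal (\<rho> y) \<partial>lborel) = ennreal M0" "0 \<le> M0"
    and E0: "(\<integral>\<^sup>+y. ennreal (\<rho> y powr m) \<partial>lborel) = ennreal E0" "0 \<le> E0"
  shows "Pf s q \<rho> \<le> ennreal (2 powr q * (enn2real (\<integral>\<^sup>+y. ennreal (K1 s y powr t) \<partial>(lborel::'a measure)) powr (q/t)
            * (M0 powr ((1 - (m1 - 1)/(m - 1)) * (q/m1)) * E0 powr ((m1 - 1)/(m - 1) * (q/m1)))
          + enn2real (\<integral>\<^sup>+y. ennreal (K2 s y powr q) \<partial>(lborel::'a measure)) * M0 powr q))"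
proof -
  define KT where "KT = (\<integral>\<^sup>+y. ennreal (K1 s y powr t) \<partial>(lborel::'a measure))"
  define KQ where "KQ = (\<integral>\<^sup>+y. ennreal (K2 s y powr q) \<partial>(lborel::'a measure))"
  define \<theta> where "\<theta> = (m1 - 1)/(m - 1)"
  have th: "0 < \<theta>" "\<theta> < 1" using m1 by (auto simp: \<theta>_def)
  have KTfin: "KT < top"
    unfolding KT_def using kernel_in_finite[OF s, of t] t tN by (simp add: K1_powr)
  have KQfin: "KQ < top"
    unfolding KQ_def using kernel_out_finite[OF s, of q] q qN by (simp add: K2_powr)
  obtain kt where kt: "KT = ennreal kt" "0 \<le> kt" using KTfin by (cases KT) auto
  obtain kq where kq: "KQ = ennreal kq" "0 \<le> kq" using KQfin by (cases KQ) auto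
  define c1 where "c1 x = (\<integral>\<^sup>+y. ennreal (K1 s (x - y) * \<rho> y) \<partial>(lborel::'a measure))" for x
  define c2 where "c2 x = (\<integral>\<^sup>+y. ennreal (K2 s (x - y) * \<rho> y) \<partial>(lborel::'a measure))" for x
  have [measurable]: "c1 \<in> borel_measurable borel" "c2 \<in> borel_measurable borel"
    unfolding c1_def[abs_def] c2_def[abs_def] by measurable measurable
  have "Pf s q \<rho> \<le> (\<integral>\<^sup>+x. ennreal (2 powr q) * (enn_powr (c1 x) q + enn_powr (c2 x) q) \<partial>lborel)"
    unfolding Pf_def
  proof (rule nn_integral_mono)
    fix x :: 'a
    show "enn_powr (riesz_conv_nn s \<rho> x) q \<le> ennreal (2 powr q) * (enn_powr (c1 x) q + enn_powr (c2 x) q)"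
      unfolding conv_split[OF s \<open>\<rho> \<in> _\<close> nn] c1_def c2_def
      using q by (intro enn_powr_add_le) auto
  qed
  also have "\<dots> = ennreal (2 powr q) * ((\<integral>\<^sup>+x. enn_powr (c1 x) q \<partial>lborel) + (\<integral>\<^sup>+x. enn_powr (c2 x) q \<partial>lborel))"
    by (simp add: nn_integral_cmult nn_integral_add)
  finally have P0: "Pf s q \<rho> \<le> ennreal (2 powr q) * ((\<integral>\<^sup>+x. enn_powr (c1 x) q \<partial>lborel) + (\<integral>\<^sup>+x. enn_powr (c2 x) q \<partial>lborel))" .
  have B1: "(\<integral>\<^sup>+x. enn_powr (c1 x) q \<partial>lborel)
      \<le> enn_powr KT (q/t) * enn_powr (\<integral>\<^sup>+y. ennreal (\<rho> y powr m1) \<partial>lborel) (q/m1)"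
    unfolding c1_def KT_def
    by (rule young_conv) (use K12_nonneg[OF s] nn t m1 rel in auto)
  have B2: "(\<integral>\<^sup>+x. enn_powr (c2 x) q \<partial>lborel) \<le> KQ * enn_powr (\<integral>\<^sup>+y. ennreal (\<rho> y) \<partial>lborel) q"
    unfolding c2_def KQ_def
    by (rule jensen_conv) (use K12_nonneg[OF s] nn q in auto)
  have B3: "(\<integral>\<^sup>+y. ennreal (\<rho> y powr m1) \<partial>lborel) \<le> enn_powr (ennreal E0) \<theta> * enn_powr (ennreal M0) (1 - \<theta>)"
  proof -
    have pt: "\<rho> y powr m1 = (\<rho> y powr m) powr \<theta> * \<rho> y powr (1 - \<theta>)" for y
    proof (cases "\<rho> y = 0")
      case True then show ?thesis using m1 th by simp
    next
      case False
      then have "0 < \<rho> y" using nn[of y] by auto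
      moreover have "m * \<theta> + (1 - \<theta>) = m1"
      proof -
        have "(m - 1) * \<theta> = m1 - 1" using m1 by (simp add: \<theta>_def)
        then show ?thesis by (simp add: algebra_simps)
      qed
      ultimately show ?thesis by (simp add: powr_powr powr_add[symmetric])
    qed
    show ?thesis unfolding pt E0(1)[symmetric] M0(1)[symmetric]
      by (rule holder_log) (use nn th in auto)
  qed
  have B3': "enn_powr (\<integral>\<^sup>+y. ennreal (\<rho> y powr m1) \<partial>lborel) (q/m1)
     \<le> enn_powr (enn_powr (ennreal E0) \<theta> * enn_powr (ennreal M0) (1 - \<theta>)) (q/m1)"
    using B3 m1 by (intro enn_powr_mono) auto
  have "Pf s q \<rho> \<le> ennreal (2 powr q) * (enn_powr (ennreal kt) (q/t) * enn_powr (enn_powr (ennreal E0) \<theta> * enn_powr (ennreal M0) (1 - \<theta>)) (q/m1)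
      + ennreal kq * enn_powr (ennreal M0) q)"
    using P0 B1 B2 B3' unfolding kt kq M0(1)
    by (meson add_mono mult_left_mono order_trans zero_le)
  also have "\<dots> = ennreal (2 powr q * (kt powr (q/t) * (M0 powr ((1 - \<theta>) * (q/m1)) * E0 powr (\<theta> * (q/m1))) + kq * M0 powr q))"
    using kt kq M0 E0 th m1
    by (simp add: ennreal_mult[symmetric] ennreal_plus[symmetric] powr_mult powr_powr mult_ac del: ennreal_plus)
  finally show ?thesis unfolding \<theta>_def KT_def[symmetric] KQ_def[symmetric] kt kq using kt kq by simp
qed

lemma exponent_choice:
  fixes N s q m :: real
  assumes N: "0 < N" and s: "0 < s" "s < N" and q: "1 < q" and qN: "N < (N - s) * q"
    and m: "1 < m" "q - s * q / N < m"
  shows "\<exists>t m1. 1 < t \<and> t < q \<and> 1 < m1 \<and> m1 < q \<and> m1 < m \<and> 1/t + 1/m1 = 1 + 1/q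
     \<and> (N - s) * t < N \<and> (m1 - 1)/(m - 1) * (q/m1) < 1"
proof -
  define a where "a = 1/q"
  define b where "b = s/N"
  have a: "0 < a" "a < 1" using q by (auto simp: a_def)
  have b: "0 < b" "b < 1" using s N by (auto simp: b_def)
  have ab: "a + b < 1"
  proof -
    have "N < N * q - s * q" using qN by (simp add: algebra_simps)
    then have "N / (N * q) < (N * q - s * q) / (N * q)" using N q by (intro divide_strict_right_mono) auto
    then show ?thesis using N q by (simp add: a_def b_def field_simps)
  qed
  have ma: "1 - b < m * a"
  proof -
    have "0 < (m - (q - s * q / N)) / q" using m q by simp
    also have "(m - (q - s * q / N)) / q = m * a - (1 - b)"
      using N q by (simp add: a_def b_def field_simps)
    finally show ?thesis by simp
  qed
  have i1: "1/m < a + b"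
  proof -
    have "m * (a + b) = m * a + m * b" by (simp add: algebra_simps)
    also have "\<dots> > 1 - b + m * b" using ma by simp
    finally have "m * (a + b) > 1 + (m - 1) * b" by (simp add: algebra_simps)
    moreover have "(m - 1) * b > 0" using m b by simp
    ultimately have "m * (a + b) > 1" by linarith
    then show ?thesis using m by (simp add: field_simps)
  qed
  have i2: "1 - (m - 1) * a < a + b" using ma by (simp add: algebra_simps)
  define L where "L = max (max a (1/m)) (1 - (m - 1) * a)"
  have L: "L < a + b" using i1 i2 b unfolding L_def by auto
  define v where "v = (L + (a + b)) / 2"
  have v: "L < v" "v < a + b" using L by (auto simp: v_def)
  have va: "a < v" "1/m < v" "1 - (m - 1) * a < v" using v unfolding L_def by auto
  have v1: "v < 1" using v ab by simp
  have vpos: "0 < v" using va a by simp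
  define m1 where "m1 = 1 / v"
  define t where "t = 1 / (1 + a - v)"
  have upos: "0 < 1 + a - v" using v1 a by simp
  show ?thesis
  proof (intro exI conjI)
    show "1 < t" using va(1) upos a by (simp add: t_def field_simps)
    show "t < q" using upos v1 q by (simp add: t_def a_def field_simps)
    show "1 < m1" using v1 vpos by (simp add: m1_def field_simps)
    show "m1 < q" using va(1) vpos q by (simp add: m1_def a_def field_simps)
    show "m1 < m" using va(2) vpos m by (simp add: m1_def field_simps)
    show "1/t + 1/m1 = 1 + 1/q" using vpos upos by (simp add: t_def m1_def a_def)
    show "(N - s) * t < N"
    proof -
      have "1 - b < 1 + a - v" using v(2) by simp
      then have "(1 - b) * t < (1 + a - v) * t" using upos by (intro mult_strict_right_mono) (auto simp: t_def)
      also have "\<dots> = 1" using upos by (simp add: t_def)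
      finally have "(1 - b) * t < 1" .
      then have "N * ((1 - b) * t) < N" using N by simp
      then show ?thesis using N by (simp add: b_def algebra_simps)
    qed
    show "(m1 - 1)/(m - 1) * (q/m1) < 1"
    proof -
      have "(m1 - 1)/(m - 1) * (q/m1) = (1 - v) / ((m - 1) * a)"
        using vpos v1 m a q by (simp add: m1_def a_def field_simps)
      also have "\<dots> < 1" using va(3) m a by (simp add: field_simps)
      finally show ?thesis .
    qed
  qed
qed

lemma sublinear_bound:
  fixes k e \<beta> :: real
  assumes "0 \<le> k" "0 < e" "0 < \<beta>" "\<beta> < 1"
  shows "\<exists>C. \<forall>E\<ge>0. k * E powr \<beta> \<le> e * E + C"
proof -
  define E0 where "E0 = (k / e) powr (1 / (1 - \<beta>))"
  show ?thesis
  proof (intro exI allI impI)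
    fix E :: real assume E: "0 \<le> E"
    show "k * E powr \<beta> \<le> e * E + k * E0 powr \<beta>"
    proof (cases "E \<le> E0")
      case True
      then have "E powr \<beta> \<le> E0 powr \<beta>" using E assms by (intro powr_mono2) auto
      then have "k * E powr \<beta> \<le> k * E0 powr \<beta>" using assms by (intro mult_left_mono) auto
      then show ?thesis using E assms by (smt (verit) mult_nonneg_nonneg)
    next
      case False
      have "0 \<le> E0" by (simp add: E0_def)
      then have Epos: "0 < E" "E0 < E" using E False by auto
      have "E0 powr (1 - \<beta>) \<le> E powr (1 - \<beta>)" using Epos assms
        by (intro powr_mono2) (auto simp: E0_def)
      moreover have "E0 powr (1 - \<beta>) = k / e" using assms
        by (simp add: E0_def powr_powr)
      ultimately have "k / e \<le> E powr (1 - \<beta>)" by simp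
      then have "k \<le> e * E powr (1 - \<beta>)" using assms by (simp add: field_simps)
      then have "k * E powr \<beta> \<le> e * E powr (1 - \<beta>) * E powr \<beta>" by (intro mult_right_mono) auto
      also have "\<dots> = e * E" using Epos by (simp add: mult.assoc powr_add[symmetric])
      finally show ?thesis using assms by (smt (verit) mult_nonneg_nonneg powr_ge_zero)
    qed
  qed
qed

lemma powr_diff_to_minf:
  fixes a b X Y B :: real
  assumes "0 < a" "a < b" "0 \<le> X" "0 < Y"
  shows "\<exists>c>0. c powr a * X - c powr b * Y < B"
proof -
  define c where "c = max 1 (((X + 1 + \<bar>B\<bar>) / Y) powr (1 / (b - a)))"
  have c1: "1 \<le> c" by (simp add: c_def)
  have "((X + 1 + \<bar>B\<bar>) / Y) powr (1 / (b - a)) \<le> c" by (simp add: c_def)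
  then have "(((X + 1 + \<bar>B\<bar>) / Y) powr (1 / (b - a))) powr (b - a) \<le> c powr (b - a)"
    using assms by (intro powr_mono2) auto
  also have "(((X + 1 + \<bar>B\<bar>) / Y) powr (1 / (b - a))) powr (b - a) = (X + 1 + \<bar>B\<bar>) / Y"
    using assms by (simp add: powr_powr)
  finally have "X + 1 + \<bar>B\<bar> \<le> c powr (b - a) * Y" using assms by (simp add: field_simps)
  then have "c powr a * (X + 1 + \<bar>B\<bar>) \<le> c powr a * (c powr (b - a) * Y)"
    by (intro mult_left_mono) auto
  also have "\<dots> = c powr b * Y" using c1 by (simp add: mult.assoc[symmetric] powr_add[symmetric])
  finally have st: "c powr a * X - c powr b * Y \<le> - (c powr a * (1 + \<bar>B\<bar>))" by (simp add: algebra_simps)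
  have "1 \<le> c powr a" using c1 assms by (simp add: ge_one_powr_ge_zero)
  then have "c powr a * (1 + \<bar>B\<bar>) \<ge> 1 + \<bar>B\<bar>" by (simp add: mult_le_cancel_right1)
  then have "c powr a * X - c powr b * Y < B" using st by linarith
  then show ?thesis using c1 by (intro exI[of _ c]) auto
qed

lemma powr_diff_neg:
  fixes a b X Y :: real
  assumes "0 < b" "b < a" "0 \<le> X" "0 < Y"
  shows "\<exists>c>0. c powr a * X - c powr b * Y < 0"
proof -
  define c where "c = min 1 ((Y / (2 * (X + 1))) powr (1 / (a - b)))"
  have cpos: "0 < c" using assms by (simp add: c_def)
  have "c \<le> (Y / (2 * (X + 1))) powr (1 / (a - b))" by (simp add: c_def)
  then have "c powr (a - b) \<le> ((Y / (2 * (X + 1))) powr (1 / (a - b))) powr (a - b)"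
    using assms cpos by (intro powr_mono2) auto
  also have "\<dots> = Y / (2 * (X + 1))" using assms by (simp add: powr_powr)
  finally have cb: "c powr (a - b) \<le> Y / (2 * (X + 1))" .
  have "c powr (a - b) * X \<le> Y / (2 * (X + 1)) * X" using cb assms by (intro mult_right_mono) auto
  also have "\<dots> < Y"
  proof -
    have "X / (2 * (X + 1)) < 1" using assms by (simp add: field_simps)
    then have "Y * (X / (2 * (X + 1))) < Y * 1" using assms by (intro mult_strict_left_mono) auto
    then show ?thesis by (simp add: field_simps)
  qed
  finally have lt: "c powr (a - b) * X < Y" .
  have "c powr a * X = c powr b * (c powr (a - b) * X)"
    using cpos by (simp add: mult.assoc[symmetric] powr_add[symmetric])
  also have "\<dots> < c powr b * Y" using lt cpos by (intro mult_strict_left_mono) auto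
  finally show ?thesis using cpos by (intro exI[of _ c]) auto
qed

lemma adm_classD:
  assumes "\<rho> \<in> adm_class m M"
  shows "\<And>x. 0 \<le> \<rho> x" "integrable lborel \<rho>" "\<rho> \<in> borel_measurable borel"
    "integrable lborel (\<lambda>x. \<rho> x powr m)" "(\<integral>x. \<rho> x \<partial>lborel) = M"
    "integrable lborel (\<lambda>x. \<rho> x *\<^sub>R x)" "(\<integral>x. \<rho> x *\<^sub>R x \<partial>lborel) = 0"
  using assms by (auto simp: adm_class_def in_Lq_def)

lemma adm_classI:
  assumes "\<And>x. 0 \<le> \<rho> x" "integrable lborel \<rho>"
    "integrable lborel (\<lambda>x. \<rho> x powr m)" "(\<integral>x. \<rho> x \<partial>lborel) = M"
    "integrable lborel (\<lambda>x. \<rho> x *\<^sub>R x)" "(\<integral>x. \<rho> x *\<^sub>R x \<partial>lborel) = 0"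
  shows "\<rho> \<in> adm_class m M"
  using assms by (auto simp: adm_class_def in_Lq_def)

lemma nn_integral_of_integrable:
  assumes "integrable lborel f" "\<And>x. 0 \<le> f x"
  shows "(\<integral>\<^sup>+x. ennreal (f x) \<partial>lborel) = ennreal (\<integral>x. f x \<partial>lborel)"
  using assms by (intro nn_integral_eq_integral) auto

lemma integral_dilate:
  fixes f :: "'a::euclidean_space \<Rightarrow> 'b::{banach, second_countable_topology}"
  assumes c: "0 < c"
  shows "(\<integral>x. f (c *\<^sub>R x) \<partial>lborel) = (c powr (- real DIM('a))) *\<^sub>R (\<integral>x. f x \<partial>lborel)"
proof -
  have "(\<integral>x. f x \<partial>lborel) = (c ^ DIM('a)) *\<^sub>R (\<integral>x. f (0 + c *\<^sub>R x) \<partial>lborel)"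
    using lborel_integral_affine_eucl[of c f 0] c by simp
  then have "(c powr (- real DIM('a))) *\<^sub>R (\<integral>x. f x \<partial>lborel) = (c powr (- real DIM('a)) * c ^ DIM('a)) *\<^sub>R (\<integral>x. f (c *\<^sub>R x) \<partial>lborel)"
    by simp
  also have "c powr (- real DIM('a)) * c ^ DIM('a) = 1"
    using c by (simp add: powr_realpow[symmetric] powr_add[symmetric])
  finally show ?thesis by simp
qed

lemma integrable_dilate:
  fixes f :: "'a::euclidean_space \<Rightarrow> 'b::{banach, second_countable_topology}"
  assumes "integrable lborel f" "0 < c"
  shows "integrable lborel (\<lambda>x. f (c *\<^sub>R x))"
  using lborel_integrable_affine_eucl[OF assms(1), of c 0] assms(2) by simp

lemma adm_dil:
  fixes \<rho> :: "'a::euclidean_space \<Rightarrow> real"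
  assumes \<rho>: "\<rho> \<in> adm_class m M" and c: "0 < c" and m: "1 < m"
  shows "dil c \<rho> \<in> adm_class m M"
proof (rule adm_classI)
  note D = adm_classD[OF \<rho>]
  show "0 \<le> dil c \<rho> x" for x using D(1) c by (simp add: dil_def)
  show "integrable lborel (dil c \<rho>)"
    unfolding dil_def using integrable_dilate[OF D(2) c] by simp
  have "(\<lambda>x. dil c \<rho> x powr m) = (\<lambda>x. (c ^ DIM('a)) powr m * \<rho> (c *\<^sub>R x) powr m)"
    using D(1) c by (simp add: dil_def powr_mult)
  then show "integrable lborel (\<lambda>x. dil c \<rho> x powr m)"
    using integrable_dilate[OF D(4) c] by simp
  show "(\<integral>x. dil c \<rho> x \<partial>lborel) = M"
    unfolding dil_def using c D(5)
    by (simp add: integral_dilate powr_realpow[symmetric] powr_add[symmetric])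
  have eq: "(\<lambda>x. dil c \<rho> x *\<^sub>R x) = (\<lambda>x. (c ^ DIM('a) / c) *\<^sub>R (\<rho> (c *\<^sub>R x) *\<^sub>R (c *\<^sub>R x)))"
    using c by (auto simp: dil_def)
  show "integrable lborel (\<lambda>x. dil c \<rho> x *\<^sub>R x)"
    unfolding eq by (intro integrable_scaleR_right) (rule integrable_dilate[OF D(6) c])
  have "(\<integral>x. \<rho> (c *\<^sub>R x) *\<^sub>R (c *\<^sub>R x) \<partial>lborel) = 0"
    using integral_dilate[of c "\<lambda>y. \<rho> y *\<^sub>R y"] c D(7) by simp
  then show "(\<integral>x. dil c \<rho> x *\<^sub>R x \<partial>lborel) = 0"
    unfolding eq by (simp only: integral_scaleR_right scaleR_zero_right)
qed

lemma E_dil: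
  fixes \<rho> :: "'a::euclidean_space \<Rightarrow> real"
  assumes nn: "\<And>x. 0 \<le> \<rho> x" and c: "0 < c"
  shows "(\<integral>x. dil c \<rho> x powr m \<partial>lborel) = c powr (real DIM('a) * (m - 1)) * (\<integral>x. \<rho> x powr m \<partial>lborel)"
proof -
  have "(\<lambda>x. dil c \<rho> x powr m) = (\<lambda>x. c powr (real DIM('a) * m) * \<rho> (c *\<^sub>R x) powr m)"
    using nn c by (simp add: dil_def powr_mult powr_realpow[symmetric] powr_powr)
  then have "(\<integral>x. dil c \<rho> x powr m \<partial>lborel) = c powr (real DIM('a) * m) * (c powr (- real DIM('a)) * (\<integral>x. \<rho> x powr m \<partial>lborel))"
    using c by (simp add: integral_dilate[of c "\<lambda>y. \<rho> y powr m"])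
  also have "\<dots> = c powr (real DIM('a) * (m - 1)) * (\<integral>x. \<rho> x powr m \<partial>lborel)"
    by (simp add: mult.assoc[symmetric] powr_add[symmetric] algebra_simps)
  finally show ?thesis .
qed

lemma adm_translate:
  fixes \<rho> :: "'a::euclidean_space \<Rightarrow> real"
  assumes nn: "\<And>x. 0 \<le> \<rho> x" and i1: "integrable lborel \<rho>" and im: "integrable lborel (\<lambda>x. \<rho> x powr m)"
    and mass: "(\<integral>x. \<rho> x \<partial>lborel) = M" and M: "0 < M" and fm: "integrable lborel (\<lambda>x. \<rho> x *\<^sub>R x)"
  shows "(\<lambda>y. \<rho> (y + (1/M) *\<^sub>R (\<integral>x. \<rho> x *\<^sub>R x \<partial>lborel))) \<in> adm_class m M"
proof -
  define t where "t = (1/M) *\<^sub>R (\<integral>x. \<rho> x *\<^sub>R x \<partial>lborel)"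
  have tr: "integrable lborel (\<lambda>y. f (y + t)) \<and> (\<integral>y. f (y + t) \<partial>lborel) = (\<integral>y. f y \<partial>lborel)"
    if "integrable lborel f" for f :: "'a \<Rightarrow> 'b::{banach, second_countable_topology}"
    using lborel_integrable_affine_eucl[OF that, of 1 t] lborel_integral_affine_eucl[of 1 f t]
    by (simp add: add.commute)
  have fm2: "integrable lborel (\<lambda>y. \<rho> y *\<^sub>R (y - t))"
    using fm i1 by (simp add: scaleR_diff_right)
  have "(\<integral>y. \<rho> (y + t) *\<^sub>R y \<partial>lborel) = (\<integral>y. \<rho> y *\<^sub>R (y - t) \<partial>lborel)"
    using tr[OF fm2] by simp
  also have "\<dots> = (\<integral>x. \<rho> x *\<^sub>R x \<partial>lborel) - (\<integral>y. \<rho> y *\<^sub>R t \<partial>lborel)"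
    using fm i1 by (simp add: scaleR_diff_right integral_diff)
  also have "(\<integral>y. \<rho> y *\<^sub>R t \<partial>lborel) = M *\<^sub>R t" using mass integral_scaleR_left[of t lborel \<rho>] i1 by simp
  also have "M *\<^sub>R t = (\<integral>x. \<rho> x *\<^sub>R x \<partial>lborel)" using M by (simp add: t_def)
  finally have fm0: "(\<integral>y. \<rho> (y + t) *\<^sub>R y \<partial>lborel) = 0" by simp
  show ?thesis unfolding t_def[symmetric]
  proof (rule adm_classI)
    show "0 \<le> \<rho> (x + t)" for x using nn by simp
    show "integrable lborel (\<lambda>y. \<rho> (y + t))" using tr[OF i1] by simp
    show "integrable lborel (\<lambda>y. \<rho> (y + t) powr m)" using tr[OF im] by simp
    show "(\<integral>y. \<rho> (y + t) \<partial>lborel) = M" using tr[OF i1] mass by simp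
    show "integrable lborel (\<lambda>y. \<rho> (y + t) *\<^sub>R y)" using tr[OF fm2] by simp
    show "(\<integral>y. \<rho> (y + t) *\<^sub>R y \<partial>lborel) = 0" by (rule fm0)
  qed
qed

definition rho0 :: "real \<Rightarrow> 'a::euclidean_space \<Rightarrow> real" where
  "rho0 M = (\<lambda>x. M / measure lborel (cball (0::'a) 1) * indicator (cball 0 1) x)"

lemma cball_borel[measurable]: "cball (c::'a::euclidean_space) r \<in> sets borel"
  by simp

lemma vol_pos: "0 < measure lborel (cball (0::'a::euclidean_space) 1)"
  by (rule content_cball_pos) simp

lemma rho0_adm:
  assumes M: "0 < M" and m: "1 < m"
  shows "(rho0 M :: 'a::euclidean_space \<Rightarrow> real) \<in> adm_class m M"
proof -
  define v where "v = measure lborel (cball (0::'a) 1)"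
  have v: "0 < v" unfolding v_def by (rule vol_pos)
  have fin: "emeasure lborel (cball (0::'a) 1) < top" using emeasure_lborel_cball_finite[of "0::'a" 1] by simp
  have r: "rho0 M = (\<lambda>x::'a. M / v * indicator (cball 0 1) x)" by (simp add: rho0_def v_def)
  have fmeq: "(\<lambda>x::'a. rho0 M x *\<^sub>R x) = (\<lambda>x. indicator (cball 0 1) x *\<^sub>R ((M / v) *\<^sub>R x))"
    by (auto simp: r indicator_def)
  have fmi: "integrable lborel (\<lambda>x::'a. rho0 M x *\<^sub>R x)"
    unfolding fmeq by (rule borel_integrable_compact) (auto intro!: continuous_intros)
  show ?thesis
  proof (rule adm_classI)
    show "0 \<le> rho0 M x" for x :: 'a using M v by (simp add: r indicator_def)
    show "integrable lborel (rho0 M :: 'a \<Rightarrow> real)" unfolding r using fin by simp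
    have "(\<lambda>x::'a. rho0 M x powr m) = (\<lambda>x. (M / v) powr m * indicator (cball 0 1) x)"
      using m by (auto simp: r indicator_def)
    then show "integrable lborel (\<lambda>x::'a. rho0 M x powr m)" using fin by simp
    have "(\<integral>x. rho0 M (x::'a) \<partial>lborel) = M / v * (\<integral>x. indicator (cball (0::'a) 1) x \<partial>lborel)"
      unfolding r by (rule integral_mult_right_zero)
    also have "(\<integral>x. indicator (cball (0::'a) 1) x \<partial>lborel) = v"
      unfolding v_def by simp
    finally show "(\<integral>x. rho0 M (x::'a) \<partial>lborel) = M" using v by simp
    show "integrable lborel (\<lambda>x::'a. rho0 M x *\<^sub>R x)" by (rule fmi)
    have "(\<integral>x. rho0 M (x::'a) *\<^sub>R x \<partial>lborel) = (\<bar>-1\<bar> ^ DIM('a)) *\<^sub>R (\<integral>x. rho0 M (0 + (-1) *\<^sub>R (x::'a)) *\<^sub>R (0 + (-1) *\<^sub>R x) \<partial>lborel)"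
      by (rule lborel_integral_affine_eucl[where c="-1" and f="\<lambda>x::'a. rho0 M x *\<^sub>R x" and t=0]) simp
    also have "(\<lambda>x::'a. rho0 M (0 + (-1) *\<^sub>R x) *\<^sub>R (0 + (-1) *\<^sub>R x)) = (\<lambda>x. - (rho0 M x *\<^sub>R x))"
      by (auto simp: r indicator_def)
    finally have "(\<integral>x. rho0 M (x::'a) *\<^sub>R x \<partial>lborel) = - (\<integral>x. rho0 M (x::'a) *\<^sub>R x \<partial>lborel)"
      by (simp add: integral_minus)
    then have "(2::real) *\<^sub>R (\<integral>x. rho0 M (x::'a) *\<^sub>R x \<partial>lborel) = 0"
      by (simp add: scaleR_2 eq_neg_iff_add_eq_0)
    then show "(\<integral>x. rho0 M (x::'a) *\<^sub>R x \<partial>lborel) = (0::'a)" by simp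
  qed
qed

lemma rho0_not_AE0:
  assumes M: "0 < M"
  shows "\<not> (AE y in lborel. (rho0 M :: 'a::euclidean_space \<Rightarrow> real) y = 0)"
proof
  assume "AE y in lborel. (rho0 M :: 'a \<Rightarrow> real) y = 0"
  then have "AE y in lborel. y \<notin> cball (0::'a) 1"
    using M vol_pos[where 'a='a] by (auto simp: rho0_def indicator_def elim!: AE_mp)
  then have "emeasure lborel (cball (0::'a) 1) = 0"
    by (subst (asm) AE_iff_measurable[of "cball 0 1"]) auto
  moreover have "emeasure lborel (cball (0::'a) 1) = ennreal (measure lborel (cball (0::'a) 1))"
    using emeasure_lborel_cball_finite[of "0::'a" 1] by (intro emeasure_eq_ennreal_measure) simp
  ultimately show False using vol_pos[where 'a='a] by simp
qed

lemma kernel_in_L1: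
  assumes "0 < s" "s < real DIM('a)"
  shows "(\<integral>\<^sup>+y. ennreal (K1 s y) \<partial>(lborel::'a::euclidean_space measure)) < top"
proof -
  have "(\<lambda>y::'a. ennreal (K1 s y)) = (\<lambda>y. ennreal (riesz_kernel s y powr 1 * indicator {x. norm x \<le> 1} y))"
    using riesz_kernel_nonneg[OF assms] by (auto simp: K1_def)
  then show ?thesis using kernel_in_finite[OF assms, of 1] assms by simp
qed

lemma conv_finite_bounded:
  fixes \<rho> :: "'a::euclidean_space \<Rightarrow> real"
  assumes s: "0 < s" "s < real DIM('a)" and [measurable]: "\<rho> \<in> borel_measurable borel"
    and b: "\<And>y. 0 \<le> \<rho> y" "\<And>y. \<rho> y \<le> B * indicator (cball 0 R) y" and B: "0 \<le> B"
  shows "riesz_conv_nn s \<rho> x < top"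
proof -
  define c where "c = riesz_const DIM('a) (s/2)"
  have c: "0 < c" unfolding c_def using riesz_const_pos[OF s] .
  have "riesz_conv_nn s \<rho> x \<le> (\<integral>\<^sup>+y. ennreal B * ennreal (K1 s (x - y)) + ennreal (B * c) * indicator (cball 0 R) y \<partial>lborel)"
    unfolding riesz_conv_nn_def
  proof (rule nn_integral_mono)
    fix y :: 'a
    have k: "riesz_kernel s (x - y) = K1 s (x - y) + K2 s (x - y)" by (rule K12_sum)
    have k1: "0 \<le> K1 s (x - y)" "0 \<le> K2 s (x - y)" using K12_nonneg[OF s] by auto
    have k2: "K2 s (x - y) \<le> c"
      using riesz_kernel_out_le[OF s, of "x - y"] c by (auto simp: K2_def c_def indicator_def)
    have "riesz_kernel s (x - y) * \<rho> y \<le> (K1 s (x - y) + K2 s (x - y)) * (B * indicator (cball 0 R) y)"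
      unfolding k using b[of y] k1 by (intro mult_left_mono) auto
    also have "\<dots> \<le> B * K1 s (x - y) + B * c * indicator (cball 0 R) y"
      using k1 k2 B by (auto simp: indicator_def algebra_simps mult_left_mono)
    finally show "ennreal (riesz_kernel s (x - y) * \<rho> y) \<le> ennreal B * ennreal (K1 s (x - y)) + ennreal (B * c) * indicator (cball 0 R) y"
      using B c k1 by (simp add: ennreal_mult[symmetric] ennreal_plus[symmetric] ennreal_indicator[symmetric] del: ennreal_plus)
  qed
  also have "\<dots> = (\<integral>\<^sup>+y. ennreal B * ennreal (K1 s (x - y)) \<partial>lborel) + (\<integral>\<^sup>+y. ennreal (B * c) * indicator (cball (0::'a) R) y \<partial>lborel)"
    by (rule nn_integral_add; measurable)
  also have "\<dots> = ennreal B * (\<integral>\<^sup>+y. ennreal (K1 s (x - y)) \<partial>lborel) + ennreal (B * c) * emeasure lborel (cball (0::'a) R)"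
    by (simp add: nn_integral_cmult nn_integral_cmult_indicator)
  also have "(\<integral>\<^sup>+y. ennreal (K1 s (x - y)) \<partial>lborel) = (\<integral>\<^sup>+y. ennreal (K1 s y) \<partial>(lborel::'a measure))"
    by (rule nn_integral_reflect_eucl[of "\<lambda>y. ennreal (K1 s y)"]) measurable
  also have "ennreal B * \<dots> + ennreal (B * c) * emeasure lborel (cball (0::'a) R) < top"
    using kernel_in_L1[OF s] emeasure_lborel_cball_finite[of "0::'a" R]
    by (simp add: ennreal_mult_less_top)
  finally show ?thesis .
qed

lemma conv_bochner:
  fixes \<rho> :: "'a::euclidean_space \<Rightarrow> real"
  assumes s: "0 < s" "s < real DIM('a)" and [measurable]: "\<rho> \<in> borel_measurable borel"
    and nn: "\<And>y. 0 \<le> \<rho> y" and fin: "riesz_conv_nn s \<rho> x < top"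
  shows "riesz_conv_nn s \<rho> x = ennreal (riesz_conv s \<rho> x)" "0 \<le> riesz_conv s \<rho> x"
proof -
  have nnk: "0 \<le> riesz_kernel s (x - y) * \<rho> y" for y using riesz_kernel_nonneg[OF s] nn by simp
  have int: "integrable lborel (\<lambda>y. riesz_kernel s (x - y) * \<rho> y)"
    using fin nnk unfolding riesz_conv_nn_def by (intro integrableI_bounded) auto
  show "riesz_conv_nn s \<rho> x = ennreal (riesz_conv s \<rho> x)"
    unfolding riesz_conv_nn_def riesz_conv_def using int nnk by (intro nn_integral_eq_integral) auto
  show "0 \<le> riesz_conv s \<rho> x"
    unfolding riesz_conv_def using nnk by (intro integral_nonneg_AE) auto
qed

lemma numer_eq:
  fixes \<rho> :: "'a::euclidean_space \<Rightarrow> real"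
  assumes s: "0 < s" "s < real DIM('a)" and [measurable]: "\<rho> \<in> borel_measurable borel"
    and nn: "\<And>y. 0 \<le> \<rho> y" and fin: "riesz_conv_nn s \<rho> x < top"
  shows "ennreal (\<bar>riesz_conv s \<rho> x\<bar> powr q) = enn_powr (riesz_conv_nn s \<rho> x) q"
  using conv_bochner[OF assms] by simp

lemma numer_le:
  fixes h :: "'a::euclidean_space \<Rightarrow> real"
  assumes s: "0 < s" "s < real DIM('a)" and [measurable]: "h \<in> borel_measurable borel" and q: "0 < q"
  shows "ennreal (\<bar>riesz_conv s h x\<bar> powr q) \<le> enn_powr (riesz_conv_nn s (\<lambda>y. \<bar>h y\<bar>) x) q"
proof (cases "integrable lborel (\<lambda>y. riesz_kernel s (x - y) * h y)")
  case True
  have nnk: "0 \<le> riesz_kernel s (x - y)" for y using riesz_kernel_nonneg[OF s] by simp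
  have ia: "integrable lborel (\<lambda>y. riesz_kernel s (x - y) * \<bar>h y\<bar>)"
    using integrable_abs[OF True] nnk by (simp add: abs_mult)
  have eq: "riesz_conv_nn s (\<lambda>y. \<bar>h y\<bar>) x = ennreal (\<integral>y. riesz_kernel s (x - y) * \<bar>h y\<bar> \<partial>lborel)"
    unfolding riesz_conv_nn_def using ia nnk by (intro nn_integral_eq_integral) auto
  have "\<bar>riesz_conv s h x\<bar> \<le> (\<integral>y. \<bar>riesz_kernel s (x - y) * h y\<bar> \<partial>lborel)"
    unfolding riesz_conv_def by (rule integral_abs_bound)
  also have "\<dots> = (\<integral>y. riesz_kernel s (x - y) * \<bar>h y\<bar> \<partial>lborel)"
    using nnk by (simp add: abs_mult)
  finally have le: "\<bar>riesz_conv s h x\<bar> \<le> (\<integral>y. riesz_kernel s (x - y) * \<bar>h y\<bar> \<partial>lborel)" .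
  have "0 \<le> (\<integral>y. riesz_kernel s (x - y) * \<bar>h y\<bar> \<partial>lborel)"
    using nnk by (intro integral_nonneg_AE) auto
  then show ?thesis unfolding eq using le q
    by (simp add: ennreal_leI powr_mono2)
next
  case False
  then have "riesz_conv s h x = 0" unfolding riesz_conv_def by (rule not_integrable_integral_eq)
  then show ?thesis using q by simp
qed

lemma Pf_le_SUP:
  fixes \<rho> :: "'a::euclidean_space \<Rightarrow> real" and \<sigma> :: "nat \<Rightarrow> 'a \<Rightarrow> real"
  assumes s: "0 < s" "s < real DIM('a)" and q: "0 < q"
    and [measurable]: "\<rho> \<in> borel_measurable borel" "\<And>n. \<sigma> n \<in> borel_measurable borel"
    and nn: "\<And>n y. 0 \<le> \<sigma> n y" and le: "\<And>n y. \<sigma> n y \<le> \<rho> y"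
    and inc: "\<And>n y. \<sigma> n y \<le> \<sigma> (Suc n) y" and ex: "\<And>y. \<exists>n. \<sigma> n y = \<rho> y"
  shows "Pf s q \<rho> \<le> (SUP n. Pf s q (\<sigma> n))"
proof -
  have nnk: "0 \<le> riesz_kernel s z" for z :: 'a using riesz_kernel_nonneg[OF s] by simp
  have conv: "riesz_conv_nn s \<rho> x = (SUP n. riesz_conv_nn s (\<sigma> n) x)" for x
  proof -
    have "(SUP n. riesz_conv_nn s (\<sigma> n) x) = (\<integral>\<^sup>+y. (SUP n. ennreal (riesz_kernel s (x - y) * \<sigma> n y)) \<partial>lborel)"
      unfolding riesz_conv_nn_def
    proof (rule nn_integral_monotone_convergence_SUP[symmetric])
      show "incseq (\<lambda>n y. ennreal (riesz_kernel s (x - y) * \<sigma> n y))"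
        by (rule incseq_SucI) (auto simp: le_fun_def intro!: ennreal_leI mult_left_mono inc nnk)
    qed measurable
    also have "\<dots> = riesz_conv_nn s \<rho> x"
      unfolding riesz_conv_nn_def
    proof (rule nn_integral_cong)
      fix y :: 'a
      obtain n where n: "\<sigma> n y = \<rho> y" using ex by blast
      show "(SUP n. ennreal (riesz_kernel s (x - y) * \<sigma> n y)) = ennreal (riesz_kernel s (x - y) * \<rho> y)"
      proof (rule antisym)
        show "(SUP n. ennreal (riesz_kernel s (x - y) * \<sigma> n y)) \<le> ennreal (riesz_kernel s (x - y) * \<rho> y)"
          by (rule SUP_least) (auto intro!: ennreal_leI mult_left_mono le nnk)
        show "ennreal (riesz_kernel s (x - y) * \<rho> y) \<le> (SUP n. ennreal (riesz_kernel s (x - y) * \<sigma> n y))"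
          using n by (intro SUP_upper2[of n]) auto
      qed
    qed
    finally show ?thesis by simp
  qed
  have "Pf s q \<rho> \<le> (\<integral>\<^sup>+x. (SUP n. enn_powr (riesz_conv_nn s (\<sigma> n) x) q) \<partial>lborel)"
    unfolding Pf_def conv using q by (intro nn_integral_mono enn_powr_SUP_le)
  also have "\<dots> = (SUP n. Pf s q (\<sigma> n))"
    unfolding Pf_def
  proof (rule nn_integral_monotone_convergence_SUP)
    show "incseq (\<lambda>n x. enn_powr (riesz_conv_nn s (\<sigma> n) x) q)"
      by (rule incseq_SucI)
         (auto simp: le_fun_def intro!: enn_powr_mono riesz_conv_nn_mono[OF s] inc less_imp_le[OF q])
  qed measurable
  finally show ?thesis .
qed

lemma free_energy_Pf:
  "free_energy s p m chi \<rho> = ereal (1 / (m - 1) * (\<integral>x. \<rho> x powr m \<partial>lborel)) - ereal (chi / conj_exp p) * enn2ereal (Pf s (conj_exp p) \<rho>)"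
  by (simp add: free_energy_def Pf_def)

lemma free_energy_top:
  assumes "Pf s (conj_exp p) \<rho> = top" "0 < chi / conj_exp p"
  shows "free_energy s p m chi \<rho> = -\<infinity>"
proof -
  have "chi \<noteq> 0" "conj_exp p \<noteq> 0" using assms(2) by auto
  then show ?thesis using assms by (simp add: free_energy_Pf)
qed

lemma free_energy_fin:
  assumes "Pf s (conj_exp p) \<rho> = ennreal P" "0 \<le> P"
  shows "free_energy s p m chi \<rho> = ereal (1 / (m - 1) * (\<integral>x. \<rho> x powr m \<partial>lborel) - chi / conj_exp p * P)"
  using assms by (simp add: free_energy_Pf)

lemma ereal_all_less_minf:
  assumes "\<And>B. I < ereal B" shows "I = (-\<infinity> :: ereal)"
proof (cases I)
  case (real r) then show ?thesis using assms[of r] by simp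
next
  case PInf then show ?thesis using assms[of 0] by simp
qed simp

lemma params:
  assumes p: "1 < p" and sp: "0 < s * p" "s * p < real DIM('a::euclidean_space)"
  shows "0 < s" "s < real DIM('a)" "1 < conj_exp p"
    "real DIM('a) < (real DIM('a) - s) * conj_exp p"
    "real DIM('a) * (crit_exp DIM('a) s p - 1) = (real DIM('a) - s) * conj_exp p - real DIM('a)"
    "1 < crit_exp DIM('a) s p"
    "sob_exp DIM('a) s p / conj_exp p = 1 / (crit_exp DIM('a) s p - 1)"
proof -
  define N where "N = real DIM('a)"
  have N: "0 < N" by (simp add: N_def)
  show s: "0 < s" using sp p by (simp add: zero_less_mult_iff)
  have "s * 1 < s * p" using s p by simp
  then show sN: "s < real DIM('a)" using sp by simp
  show q: "1 < conj_exp p" using p by (simp add: conj_exp_def)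
  have "N < (N - s) * conj_exp p \<longleftrightarrow> N * (p - 1) < (N - s) * p"
    using p by (simp add: conj_exp_def field_simps)
  also have "\<dots> \<longleftrightarrow> s * p < N" by (simp add: algebra_simps)
  finally show qN: "real DIM('a) < (real DIM('a) - s) * conj_exp p" using sp by (simp add: N_def)
  show e: "real DIM('a) * (crit_exp DIM('a) s p - 1) = (real DIM('a) - s) * conj_exp p - real DIM('a)"
    using N by (simp add: crit_exp_def N_def algebra_simps)
  show "1 < crit_exp DIM('a) s p"
  proof -
    have "0 < real DIM('a) * (crit_exp DIM('a) s p - 1)" using e qN by simp
    then show ?thesis by (simp add: zero_less_mult_iff)
  qed
  show "sob_exp DIM('a) s p / conj_exp p = 1 / (crit_exp DIM('a) s p - 1)"
  proof -
    have ne: "N - s * p \<noteq> 0" using sp by (simp add: N_def)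
    have p0: "p - 1 \<noteq> 0" "p \<noteq> 0" using p by auto
    have qp: "conj_exp p * (p - 1) = p" using p0 by (simp add: conj_exp_def)
    have h: "s * conj_exp p / N * (N * (p - 1)) = s * (conj_exp p * (p - 1))" using N by simp
    have "(crit_exp DIM('a) s p - 1) * (N * (p - 1)) = conj_exp p * (N * (p - 1)) - s * conj_exp p / N * (N * (p - 1)) - N * (p - 1)"
      by (simp add: crit_exp_def N_def[symmetric] left_diff_distrib)
    also have "\<dots> = conj_exp p * (p - 1) * N - s * (conj_exp p * (p - 1)) - N * (p - 1)"
      unfolding h by (simp add: mult_ac)
    also have "\<dots> = N - s * p" unfolding qp by (simp add: algebra_simps)
    finally have "crit_exp DIM('a) s p - 1 = (N - s * p) / (N * (p - 1))"
      using N p0 by (simp add: eq_divide_eq)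
    moreover have "sob_exp DIM('a) s p / conj_exp p = N * (p - 1) / (N - s * p)"
      using N p0 ne by (simp add: sob_exp_def conj_exp_def N_def field_simps)
    ultimately show ?thesis using N p0 ne by simp
  qed
qed

lemma free_energy_dil:
  fixes \<rho> :: "'a::euclidean_space \<Rightarrow> real"
  assumes p: "1 < p" and sp: "0 < s * p" "s * p < real DIM('a)"
    and nn: "\<And>x. 0 \<le> \<rho> x" and [measurable]: "\<rho> \<in> borel_measurable borel"
    and P: "Pf s (conj_exp p) \<rho> = ennreal P" "0 \<le> P" and c: "0 < c"
  shows "free_energy s p m chi (dil c \<rho>) =
    ereal (c powr (real DIM('a) * (m - 1)) * (1 / (m - 1) * (\<integral>x. \<rho> x powr m \<partial>lborel))
        - c powr (real DIM('a) * (crit_exp DIM('a) s p - 1)) * (chi / conj_exp p * P))"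
proof -
  note pa = params[OF p sp]
  have Pd: "Pf s (conj_exp p) (dil c \<rho>) = ennreal (c powr (real DIM('a) * (crit_exp DIM('a) s p - 1)) * P)"
    using Pf_dilate[OF pa(1,2) c, of "conj_exp p" \<rho>] pa P c by (simp add: pa(5) ennreal_mult)
  have "free_energy s p m chi (dil c \<rho>) = ereal (1 / (m - 1) * (\<integral>x. dil c \<rho> x powr m \<partial>lborel)
        - chi / conj_exp p * (c powr (real DIM('a) * (crit_exp DIM('a) s p - 1)) * P))"
    using P c by (intro free_energy_fin[OF Pd]) auto
  also have "(\<integral>x. dil c \<rho> x powr m \<partial>lborel) = c powr (real DIM('a) * (m - 1)) * (\<integral>x. \<rho> x powr m \<partial>lborel)"
    by (rule E_dil[OF nn c])
  finally show ?thesis by (simp only: mult_ac)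
qed

lemma E_nonneg:
  fixes \<rho> :: "'a::euclidean_space \<Rightarrow> real"
  shows "0 \<le> (\<integral>x. \<rho> x powr m \<partial>lborel)"
  by (rule integral_nonneg_AE) simp

lemma case_sub:
  assumes p: "1 < p" and sp: "0 < s * p" "s * p < real DIM('a::euclidean_space)"
    and m: "1 < m" "m < crit_exp DIM('a) s p" and chi: "0 < chi" and M: "0 < M"
  shows "Inf (free_energy s p m chi ` (adm_class m M :: ('a \<Rightarrow> real) set)) = -\<infinity>"
proof -
  note pa = params[OF p sp]
  define q where "q = conj_exp p"
  define Y where "Y = (adm_class m M :: ('a \<Rightarrow> real) set)"
  define r where "r = (rho0 M :: 'a \<Rightarrow> real)"
  have rY: "r \<in> Y" unfolding r_def Y_def by (rule rho0_adm[OF M m(1)])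
  note D = adm_classD[OF rY[unfolded Y_def]]
  have Ppos: "0 < Pf s q r"
    unfolding r_def by (rule Pf_pos[OF pa(1,2)]) (use D rho0_not_AE0[OF M] in \<open>auto simp: r_def\<close>)
  have cq: "0 < chi / q" using chi pa by (simp add: q_def)
  show ?thesis unfolding Y_def[symmetric]
  proof (cases "Pf s q r = top")
    case True
    then have "free_energy s p m chi r = -\<infinity>" using cq by (intro free_energy_top) (auto simp: q_def)
    then have "Inf (free_energy s p m chi ` Y) \<le> -\<infinity>" using rY by (metis INF_lower)
    then show "Inf (free_energy s p m chi ` Y) = -\<infinity>" by simp
  next
    case False
    then obtain P where P: "Pf s q r = ennreal P" "0 \<le> P" by (cases "Pf s q r") auto
    then have P0: "0 < P" using Ppos by simp
    define E where "E = (\<integral>x. r x powr m \<partial>lborel)"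
    have E: "0 \<le> E" unfolding E_def by (rule E_nonneg)
    show "Inf (free_energy s p m chi ` Y) = -\<infinity>"
    proof (rule ereal_all_less_minf)
      fix B :: real
      have a0: "0 < real DIM('a) * (m - 1)" using m by simp
      have ab: "real DIM('a) * (m - 1) < real DIM('a) * (crit_exp DIM('a) s p - 1)" using m by simp
      have X0: "0 \<le> 1 / (m - 1) * E" using E m by simp
      have Y0: "0 < chi / q * P" using cq P0 by (rule mult_pos_pos)
      obtain c where c: "0 < c"
        "c powr (real DIM('a) * (m - 1)) * (1 / (m - 1) * E) - c powr (real DIM('a) * (crit_exp DIM('a) s p - 1)) * (chi / q * P) < B"
        using powr_diff_to_minf[OF a0 ab X0 Y0, of B] by blast
      have "free_energy s p m chi (dil c r) = ereal (c powr (real DIM('a) * (m - 1)) * (1 / (m - 1) * E) - c powr (real DIM('a) * (crit_exp DIM('a) s p - 1)) * (chi / q * P))"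
        unfolding E_def q_def by (rule free_energy_dil[OF p sp D(1) D(3) P[unfolded q_def] c(1)])
      moreover have "dil c r \<in> Y" unfolding Y_def by (rule adm_dil[OF rY[unfolded Y_def] c(1) m(1)])
      ultimately have "Inf (free_energy s p m chi ` Y) \<le> ereal (c powr (real DIM('a) * (m - 1)) * (1 / (m - 1) * E) - c powr (real DIM('a) * (crit_exp DIM('a) s p - 1)) * (chi / q * P))"
        by (metis INF_lower)
      then show "Inf (free_energy s p m chi ` Y) < ereal B" using c(2) by (simp add: le_less_trans)
    qed
  qed
qed

lemma case_super_neg:
  assumes p: "1 < p" and sp: "0 < s * p" "s * p < real DIM('a::euclidean_space)"
    and m: "1 < m" "crit_exp DIM('a) s p < m" and chi: "0 < chi" and M: "0 < M"
  shows "Inf (free_energy s p m chi ` (adm_class m M :: ('a \<Rightarrow> real) set)) < 0"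
proof -
  note pa = params[OF p sp]
  define q where "q = conj_exp p"
  define Y where "Y = (adm_class m M :: ('a \<Rightarrow> real) set)"
  define r where "r = (rho0 M :: 'a \<Rightarrow> real)"
  have rY: "r \<in> Y" unfolding r_def Y_def by (rule rho0_adm[OF M m(1)])
  note D = adm_classD[OF rY[unfolded Y_def]]
  have Ppos: "0 < Pf s q r"
    unfolding r_def by (rule Pf_pos[OF pa(1,2)]) (use D rho0_not_AE0[OF M] in \<open>auto simp: r_def\<close>)
  have cq: "0 < chi / q" using chi pa by (simp add: q_def)
  show ?thesis unfolding Y_def[symmetric]
  proof (cases "Pf s q r = top")
    case True
    then have "free_energy s p m chi r = -\<infinity>" using cq by (intro free_energy_top) (auto simp: q_def)
    then have "Inf (free_energy s p m chi ` Y) \<le> -\<infinity>" using rY by (metis INF_lower)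
    then show "Inf (free_energy s p m chi ` Y) < 0" by simp
  next
    case False
    then obtain P where P: "Pf s q r = ennreal P" "0 \<le> P" by (cases "Pf s q r") auto
    then have P0: "0 < P" using Ppos by simp
    define E where "E = (\<integral>x. r x powr m \<partial>lborel)"
    have E: "0 \<le> E" unfolding E_def by (rule E_nonneg)
    have b0: "0 < real DIM('a) * (crit_exp DIM('a) s p - 1)" using pa(6) by simp
    have ba: "real DIM('a) * (crit_exp DIM('a) s p - 1) < real DIM('a) * (m - 1)" using m by simp
    have X0: "0 \<le> 1 / (m - 1) * E" using E m by simp
    have Y0: "0 < chi / q * P" using cq P0 by (rule mult_pos_pos)
    obtain c where c: "0 < c"
      "c powr (real DIM('a) * (m - 1)) * (1 / (m - 1) * E) - c powr (real DIM('a) * (crit_exp DIM('a) s p - 1)) * (chi / q * P) < 0"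
      using powr_diff_neg[OF b0 ba X0 Y0] by blast
    have "free_energy s p m chi (dil c r) = ereal (c powr (real DIM('a) * (m - 1)) * (1 / (m - 1) * E) - c powr (real DIM('a) * (crit_exp DIM('a) s p - 1)) * (chi / q * P))"
      unfolding E_def q_def by (rule free_energy_dil[OF p sp D(1) D(3) P[unfolded q_def] c(1)])
    moreover have "dil c r \<in> Y" unfolding Y_def by (rule adm_dil[OF rY[unfolded Y_def] c(1) m(1)])
    ultimately have "Inf (free_energy s p m chi ` Y) \<le> ereal (c powr (real DIM('a) * (m - 1)) * (1 / (m - 1) * E) - c powr (real DIM('a) * (crit_exp DIM('a) s p - 1)) * (chi / q * P))"
      by (metis INF_lower)
    then show "Inf (free_energy s p m chi ` Y) < 0" using c(2) by (simp add: le_less_trans)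
  qed
qed

lemma case_super_bdd:
  assumes p: "1 < p" and sp: "0 < s * p" "s * p < real DIM('a::euclidean_space)"
    and m: "1 < m" "crit_exp DIM('a) s p < m" and chi: "0 < chi" and M: "0 < M"
  shows "-\<infinity> < Inf (free_energy s p m chi ` (adm_class m M :: ('a \<Rightarrow> real) set))"
proof -
  note pa = params[OF p sp]
  define q where "q = conj_exp p"
  define N where "N = real DIM('a)"
  have N: "0 < N" by (simp add: N_def)
  have q: "1 < q" using pa by (simp add: q_def)
  have mc: "crit_exp DIM('a) s p = q - s * q / N" by (simp add: crit_exp_def q_def N_def)
  obtain t m1 where tm: "1 < t" "t < q" "1 < m1" "m1 < q" "m1 < m" "1/t + 1/m1 = 1 + 1/q"
     "(N - s) * t < N" "(m1 - 1)/(m - 1) * (q/m1) < 1"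
    using exponent_choice[of N s q m] N pa q m mc by (auto simp: q_def N_def)
  define kt where "kt = enn2real (\<integral>\<^sup>+y. ennreal (K1 s y powr t) \<partial>(lborel::'a measure))"
  define kq where "kq = enn2real (\<integral>\<^sup>+y. ennreal (K2 s y powr q) \<partial>(lborel::'a measure))"
  define \<theta> where "\<theta> = (m1 - 1)/(m - 1)"
  define \<beta> where "\<beta> = \<theta> * (q/m1)"
  define A where "A = 2 powr q * kt powr (q/t) * M powr ((1 - \<theta>) * (q/m1))"
  define B0 where "B0 = 2 powr q * (kq * M powr q)"
  have kt: "0 \<le> kt" "0 \<le> kq" by (simp_all add: kt_def kq_def)
  have A: "0 \<le> A" by (simp add: A_def)
  have th: "0 < \<theta>" using tm m by (simp add: \<theta>_def)
  have \<beta>: "0 < \<beta>" "\<beta> < 1" using th tm by (auto simp: \<beta>_def \<theta>_def)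
  obtain C where C: "\<And>E. 0 \<le> E \<Longrightarrow> chi / q * A * E powr \<beta> \<le> 1 / (m - 1) * E + C"
    using sublinear_bound[of "chi / q * A" "1 / (m - 1)" \<beta>] chi q A m \<beta> by auto
  have lower: "ereal (- C - chi / q * B0) \<le> free_energy s p m chi \<rho>"
    if \<rho>: "\<rho> \<in> (adm_class m M :: ('a \<Rightarrow> real) set)" for \<rho>
  proof -
    note D = adm_classD[OF \<rho>]
    define E where "E = (\<integral>x. \<rho> x powr m \<partial>lborel)"
    have E: "0 \<le> E" unfolding E_def by (rule E_nonneg)
    have nM: "(\<integral>\<^sup>+y. ennreal (\<rho> y) \<partial>lborel) = ennreal M"
      using nn_integral_of_integrable[OF D(2) D(1)] D(5) by simp
    have nE: "(\<integral>\<^sup>+y. ennreal (\<rho> y powr m) \<partial>lborel) = ennreal E"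
      using nn_integral_of_integrable[OF D(4)] unfolding E_def by simp
    have "Pf s q \<rho> \<le> ennreal (2 powr q * (kt powr (q/t) * (M powr ((1 - \<theta>) * (q/m1)) * E powr (\<theta> * (q/m1)))
          + kq * M powr q))"
      unfolding kt_def kq_def \<theta>_def
      by (rule interaction_bound[OF pa(1,2) q _ tm(1,2) _ tm(3,4,5,6) D(3) D(1) nM _ nE E])
         (use pa M tm in \<open>auto simp: q_def N_def\<close>)
    also have "2 powr q * (kt powr (q/t) * (M powr ((1 - \<theta>) * (q/m1)) * E powr (\<theta> * (q/m1))) + kq * M powr q)
        = A * E powr \<beta> + B0"
      by (simp add: A_def B0_def \<beta>_def algebra_simps)
    finally have Pb: "Pf s q \<rho> \<le> ennreal (A * E powr \<beta> + B0)" .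
    have AB: "0 \<le> A * E powr \<beta> + B0" using A kt by (simp add: B0_def)
    from Pb obtain P where P: "Pf s q \<rho> = ennreal P" "0 \<le> P" "P \<le> A * E powr \<beta> + B0"
      by (cases "Pf s q \<rho>") (auto simp: top_unique ennreal_le_iff[OF AB])
    have "free_energy s p m chi \<rho> = ereal (1 / (m - 1) * E - chi / q * P)"
      unfolding E_def q_def by (rule free_energy_fin[OF P(1)[unfolded q_def] P(2)])
    moreover have "chi / q * P \<le> chi / q * (A * E powr \<beta> + B0)"
      using P(3) chi q by (intro mult_left_mono) auto
    moreover have "chi / q * (A * E powr \<beta> + B0) = chi / q * A * E powr \<beta> + chi / q * B0"
      by (simp add: algebra_simps)
    ultimately show ?thesis using C[OF E] by simp
  qed
  have "ereal (- C - chi / q * B0) \<le> Inf (free_energy s p m chi ` (adm_class m M :: ('a \<Rightarrow> real) set))"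
    by (rule INF_greatest) (rule lower)
  then show ?thesis by (metis MInfty_neq_ereal(1) ereal_infty_less(2) order_less_le_trans)
qed

definition numer :: "real \<Rightarrow> real \<Rightarrow> ('a::euclidean_space \<Rightarrow> real) \<Rightarrow> ennreal" where
  "numer s q h = (\<integral>\<^sup>+x. ennreal (\<bar>riesz_conv s h x\<bar> powr q) \<partial>lborel)"

definition den :: "real \<Rightarrow> real \<Rightarrow> ('a::euclidean_space \<Rightarrow> real) \<Rightarrow> real" where
  "den e m h = (\<integral>x. \<bar>h x\<bar> \<partial>lborel) powr e * (\<integral>x. \<bar>h x\<bar> powr m \<partial>lborel)"

definition HLSset :: "real \<Rightarrow> ('a::euclidean_space \<Rightarrow> real) set" where
  "HLSset m = {h. in_Lq 1 h \<and> in_Lq m h \<and> \<not> (AE x in lborel. h x = 0)}"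

lemma Lq_norm_1: "Lq_norm 1 (h :: 'a::euclidean_space \<Rightarrow> real) = (\<integral>x. \<bar>h x\<bar> \<partial>lborel)"
proof -
  have "(\<lambda>x. \<bar>h x\<bar> powr 1) = (\<lambda>x. \<bar>h x\<bar>)" by (auto simp: powr_one_gt_zero_iff)
  moreover have "0 \<le> (\<integral>x. \<bar>h x\<bar> \<partial>lborel)" by (rule integral_nonneg_AE) simp
  ultimately show ?thesis by (simp add: Lq_norm_def)
qed

lemma Lq_norm_m_powr:
  assumes "0 < m"
  shows "Lq_norm m (h :: 'a::euclidean_space \<Rightarrow> real) powr m = (\<integral>x. \<bar>h x\<bar> powr m \<partial>lborel)"
proof -
  have "0 \<le> (\<integral>x. \<bar>h x\<bar> powr m \<partial>lborel)" by (rule integral_nonneg_AE) simp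
  then show ?thesis using assms by (simp add: Lq_norm_def powr_powr)
qed

lemma theta_crit:
  assumes p: "1 < p" and sp: "0 < s * p" "s * p < real DIM('a::euclidean_space)"
    and m: "m = crit_exp DIM('a) s p"
  shows "conj_exp p * (1 - theta0 DIM('a) s p m) = m"
    "conj_exp p * theta0 DIM('a) s p m = s * conj_exp p / real DIM('a)"
proof -
  note pa = params[OF p sp]
  have m1: "1 < m" using pa m by simp
  have sob: "sob_exp DIM('a) s p = conj_exp p / (m - 1)"
  proof -
    have "sob_exp DIM('a) s p / conj_exp p = 1 / (m - 1)" using pa(7) m by simp
    then show ?thesis using pa(3) m1 by (simp add: field_simps)
  qed
  show e1: "conj_exp p * (1 - theta0 DIM('a) s p m) = m"
    using m1 pa(3) by (simp add: theta0_def sob conj_exp_def[of m] field_simps)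
  show "conj_exp p * theta0 DIM('a) s p m = s * conj_exp p / real DIM('a)"
  proof -
    have "conj_exp p * theta0 DIM('a) s p m = conj_exp p - conj_exp p * (1 - theta0 DIM('a) s p m)"
      by (simp add: algebra_simps)
    also have "\<dots> = conj_exp p - m" using e1 by simp
    also have "\<dots> = s * conj_exp p / real DIM('a)" using m by (simp add: crit_exp_def)
    finally show ?thesis .
  qed
qed

lemma HLS_eq:
  assumes p: "1 < p" and sp: "0 < s * p" "s * p < real DIM('a::euclidean_space)"
    and m: "m = crit_exp DIM('a) s p"
  shows "HLS_const TYPE('a) p m s
     = Sup ((\<lambda>h. enn2ereal (numer s (conj_exp p) h) / ereal (den (s * conj_exp p / real DIM('a)) m h)) ` (HLSset m :: ('a \<Rightarrow> real) set))"
proof -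
  note th = theta_crit[OF p sp m]
  have m0: "0 < m" using params(6)[OF p sp] m by simp
  show ?thesis
    unfolding HLS_const_def Let_def HLSset_def numer_def den_def
    by (intro arg_cong[where f=Sup] image_cong refl)
       (simp add: Lq_norm_1 mult.commute[of "conj_exp p" "1 - _"] mult.commute[of "conj_exp p" "theta0 _ _ _ _"]
          th[unfolded mult.commute[of "conj_exp p"]] powr_powr[symmetric] Lq_norm_m_powr[OF m0])
qed

lemma ereal_div_le_imp:
  assumes "0 < d" "enn2ereal X / ereal d \<le> ereal r"
  shows "X \<le> ennreal (r * d)"
proof -
  have "enn2ereal X \<le> ereal r * ereal d"
    using assms by (subst (asm) ereal_divide_le_pos) (auto simp: mult.commute)
  then have le: "enn2ereal X \<le> ereal (r * d)" by simp
  have z: "0 \<le> enn2ereal X" by simp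
  have "ereal 0 \<le> ereal (r * d)" using order_trans[OF z le] by simp
  then have rd: "0 \<le> r * d" by simp
  then have "enn2ereal X \<le> enn2ereal (ennreal (r * d))"
    using le by (simp add: enn2ereal_ennreal)
  then show ?thesis by (simp add: less_eq_ennreal.rep_eq)
qed

lemma den_pos:
  assumes h: "h \<in> HLSset m" and m: "0 < m"
  shows "0 < den e m (h :: 'a::euclidean_space \<Rightarrow> real)"
proof -
  have i1: "integrable lborel (\<lambda>x. \<bar>h x\<bar>)" and im: "integrable lborel (\<lambda>x. \<bar>h x\<bar> powr m)"
    and nz: "\<not> (AE x in lborel. h x = 0)" and [measurable]: "h \<in> borel_measurable borel"
    using h by (auto simp: HLSset_def in_Lq_def powr_one_gt_zero_iff)
  have "(\<integral>x. \<bar>h x\<bar> \<partial>lborel) \<noteq> 0"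
  proof
    assume "(\<integral>x. \<bar>h x\<bar> \<partial>lborel) = 0"
    then have "AE x in lborel. \<bar>h x\<bar> = 0" using i1 by (subst (asm) integral_nonneg_eq_0_iff_AE) auto
    then show False using nz by simp
  qed
  moreover have "0 \<le> (\<integral>x. \<bar>h x\<bar> \<partial>lborel)" by (rule integral_nonneg_AE) simp
  moreover have "(\<integral>x. \<bar>h x\<bar> powr m \<partial>lborel) \<noteq> 0"
  proof
    assume "(\<integral>x. \<bar>h x\<bar> powr m \<partial>lborel) = 0"
    then have "AE x in lborel. \<bar>h x\<bar> powr m = 0" using im by (subst (asm) integral_nonneg_eq_0_iff_AE) auto
    then show False using nz by simp
  qed
  moreover have "0 \<le> (\<integral>x. \<bar>h x\<bar> powr m \<partial>lborel)" by (rule integral_nonneg_AE) simp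
  ultimately show ?thesis unfolding den_def by (simp add: less_le)
qed

lemma ereal_div_pos: "0 < (a::ereal) \<Longrightarrow> 0 < d \<Longrightarrow> 0 < a / ereal d"
  by (cases a) auto

lemma trunc_props:
  fixes \<rho> :: "'a::euclidean_space \<Rightarrow> real"
  assumes nn: "\<And>x. 0 \<le> \<rho> x" and [measurable]: "\<rho> \<in> borel_measurable borel"
  defines "\<sigma> \<equiv> \<lambda>n y. min (\<rho> y) (real n) * indicator (cball 0 (real n)) y"
  shows "\<And>n. \<sigma> n \<in> borel_measurable borel" "\<And>n y. 0 \<le> \<sigma> n y" "\<And>n y. \<sigma> n y \<le> \<rho> y"
    "\<And>n y. \<sigma> n y \<le> \<sigma> (Suc n) y" "\<And>y. \<exists>n. \<sigma> n y = \<rho> y"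
    "\<And>n y. \<sigma> n y \<le> real n * indicator (cball 0 (real n)) y"
proof -
  show "\<And>n. \<sigma> n \<in> borel_measurable borel" unfolding \<sigma>_def by measurable
  show "\<And>n y. 0 \<le> \<sigma> n y" using nn by (simp add: \<sigma>_def)
  show "\<And>n y. \<sigma> n y \<le> \<rho> y" using nn by (auto simp: \<sigma>_def indicator_def)
  show "\<And>n y. \<sigma> n y \<le> \<sigma> (Suc n) y" using nn by (auto simp: \<sigma>_def indicator_def)
  show "\<And>n y. \<sigma> n y \<le> real n * indicator (cball 0 (real n)) y" using nn by (auto simp: \<sigma>_def indicator_def)
  show "\<exists>n. \<sigma> n y = \<rho> y" for y
  proof -
    obtain n where n: "max (\<rho> y) (norm y) \<le> real n" using real_arch_simple by blast
    then show ?thesis by (intro exI[of _ n]) (auto simp: \<sigma>_def indicator_def min_def)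
  qed
qed

lemma bounded_in_Lq:
  fixes g \<rho> :: "'a::euclidean_space \<Rightarrow> real"
  assumes [measurable]: "g \<in> borel_measurable borel" and g: "\<And>y. 0 \<le> g y" "\<And>y. g y \<le> \<rho> y"
    and i: "integrable lborel (\<lambda>x. \<rho> x powr m)" and m: "0 < m"
  shows "in_Lq m g" "(\<integral>x. g x powr m \<partial>lborel) \<le> (\<integral>x. \<rho> x powr m \<partial>lborel)"
proof -
  have le: "g x powr m \<le> \<rho> x powr m" for x using g[of x] m by (intro powr_mono2) auto
  have ig: "integrable lborel (\<lambda>x. g x powr m)"
    by (rule Bochner_Integration.integrable_bound[OF i]) (use le in auto)
  then show "in_Lq m g" using g by (simp add: in_Lq_def)
  show "(\<integral>x. g x powr m \<partial>lborel) \<le> (\<integral>x. \<rho> x powr m \<partial>lborel)"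
    using ig i le by (intro integral_mono) auto
qed

lemma H_pos:
  assumes p: "1 < p" and sp: "0 < s * p" "s * p < real DIM('a::euclidean_space)"
    and m: "m = crit_exp DIM('a) s p"
  shows "0 < HLS_const TYPE('a) p m s"
proof -
  note pa = params[OF p sp]
  have m1: "1 < m" using pa m by simp
  define r where "r = (rho0 1 :: 'a \<Rightarrow> real)"
  have rY: "r \<in> adm_class m 1" unfolding r_def by (rule rho0_adm) (use m1 in auto)
  note D = adm_classD[OF rY]
  have nz: "\<not> (AE y in lborel. r y = 0)" unfolding r_def by (rule rho0_not_AE0) simp
  have rH: "r \<in> HLSset m"
    using D nz by (simp add: HLSset_def in_Lq_def powr_one_gt_zero_iff)
  have bnd: "r y \<le> (1 / measure lborel (cball (0::'a) 1)) * indicator (cball 0 1) y" for y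
    by (simp add: r_def rho0_def)
  have fin: "riesz_conv_nn s r x < top" for x
    by (rule conv_finite_bounded[OF pa(1,2) D(3) D(1) bnd]) (use vol_pos[where 'a='a] in simp)
  have "numer s (conj_exp p) r = Pf s (conj_exp p) r"
    unfolding numer_def Pf_def by (intro nn_integral_cong numer_eq[OF pa(1,2) D(3) D(1) fin])
  also have "0 < Pf s (conj_exp p) r" by (rule Pf_pos[OF pa(1,2) D(3) D(1) nz])
  finally have "0 < enn2ereal (numer s (conj_exp p) r)"
    by (metis zero_ennreal.rep_eq less_ennreal.rep_eq)
  then have "0 < enn2ereal (numer s (conj_exp p) r) / ereal (den (s * conj_exp p / real DIM('a)) m r)"
    using den_pos[OF rH] m1 by (intro ereal_div_pos) auto
  also have "\<dots> \<le> HLS_const TYPE('a) p m s"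
    unfolding HLS_eq[OF p sp m] using rH by (intro Sup_upper imageI)
  finally show ?thesis .
qed

lemma Pf_AE0:
  fixes \<sigma> :: "'a::euclidean_space \<Rightarrow> real"
  assumes [measurable]: "\<sigma> \<in> borel_measurable borel" and ae: "AE y in lborel. \<sigma> y = 0"
  shows "Pf s q \<sigma> = 0"
proof -
  have "riesz_conv_nn s \<sigma> x = 0" for x
    unfolding riesz_conv_nn_def using ae by (subst nn_integral_0_iff_AE) (auto elim!: AE_mp)
  then show ?thesis by (simp add: Pf_def)
qed

lemma Pf_crit_bound:
  fixes \<rho> :: "'a::euclidean_space \<Rightarrow> real"
  assumes p: "1 < p" and sp: "0 < s * p" "s * p < real DIM('a)"
    and m: "m = crit_exp DIM('a) s p" and H: "HLS_const TYPE('a) p m s = ereal r"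
    and nn: "\<And>x. 0 \<le> \<rho> x" and [measurable]: "\<rho> \<in> borel_measurable borel"
    and i1: "integrable lborel \<rho>" and im: "integrable lborel (\<lambda>x. \<rho> x powr m)"
  shows "Pf s (conj_exp p) \<rho> \<le> ennreal (r * ((\<integral>x. \<rho> x \<partial>lborel) powr (s * conj_exp p / real DIM('a)) * (\<integral>x. \<rho> x powr m \<partial>lborel)))"
proof -
  note pa = params[OF p sp]
  have m1: "1 < m" using pa m by simp
  define q where "q = conj_exp p"
  define e where "e = s * q / real DIM('a)"
  have e: "0 \<le> e" using pa by (simp add: e_def q_def)
  have rpos: "0 < r" using H_pos[OF p sp m] H by simp
  define \<sigma> where "\<sigma> = (\<lambda>n y. min (\<rho> y) (real n) * indicator (cball 0 (real n)) y :: real)"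
  have T: "\<And>n. \<sigma> n \<in> borel_measurable borel" "\<And>n y. 0 \<le> \<sigma> n y" "\<And>n y. \<sigma> n y \<le> \<rho> y"
    "\<And>n y. \<sigma> n y \<le> \<sigma> (Suc n) y" "\<And>y. \<exists>n. \<sigma> n y = \<rho> y"
    "\<And>n y. \<sigma> n y \<le> real n * indicator (cball 0 (real n)) y"
    unfolding \<sigma>_def by (rule trunc_props[OF nn \<open>\<rho> \<in> _\<close>])+
  define B where "B = r * ((\<integral>x. \<rho> x \<partial>lborel) powr e * (\<integral>x. \<rho> x powr m \<partial>lborel))"
  have each: "Pf s q (\<sigma> n) \<le> ennreal B" for n
  proof (cases "AE y in lborel. \<sigma> n y = 0")
    case True
    then show ?thesis using Pf_AE0[OF T(1) True] by simp
  next
    case False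
    have [measurable]: "\<sigma> n \<in> borel_measurable borel" by (rule T(1))
    have abs: "\<bar>\<sigma> n x\<bar> = \<sigma> n x" for x using T(2) by simp
    have i1s: "integrable lborel (\<sigma> n)"
      by (rule Bochner_Integration.integrable_bound[OF i1]) (use T(2,3) nn in auto)
    have i1p: "in_Lq 1 (\<sigma> n)" using i1s by (simp add: in_Lq_def abs powr_one_gt_zero_iff)
    note Lm = bounded_in_Lq[OF T(1) T(2) T(3) im, of n] m1
    have Lm1: "in_Lq m (\<sigma> n)" using Lm by simp
    have sH: "\<sigma> n \<in> HLSset m" using i1p Lm1 False by (simp add: HLSset_def)
    have fin: "riesz_conv_nn s (\<sigma> n) x < top" for x
      by (rule conv_finite_bounded[OF pa(1,2) T(1) T(2) T(6)]) simp
    have numeq: "numer s q (\<sigma> n) = Pf s q (\<sigma> n)"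
      unfolding numer_def Pf_def by (intro nn_integral_cong numer_eq[OF pa(1,2) T(1) T(2) fin])
    have "enn2ereal (numer s q (\<sigma> n)) / ereal (den e m (\<sigma> n)) \<le> HLS_const TYPE('a) p m s"
      unfolding HLS_eq[OF p sp m] q_def e_def using sH by (intro Sup_upper imageI)
    then have "Pf s q (\<sigma> n) \<le> ennreal (r * den e m (\<sigma> n))"
      using ereal_div_le_imp[OF den_pos[OF sH] _] m1 H numeq by simp
    also have "den e m (\<sigma> n) \<le> (\<integral>x. \<rho> x \<partial>lborel) powr e * (\<integral>x. \<rho> x powr m \<partial>lborel)"
    proof -
      have a1: "(\<integral>x. \<bar>\<sigma> n x\<bar> \<partial>lborel) \<le> (\<integral>x. \<rho> x \<partial>lborel)"
        unfolding abs using i1s i1 T(3) by (intro integral_mono) auto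
      have a0: "0 \<le> (\<integral>x. \<bar>\<sigma> n x\<bar> \<partial>lborel)" by (rule integral_nonneg_AE) simp
      have b1: "(\<integral>x. \<bar>\<sigma> n x\<bar> powr m \<partial>lborel) \<le> (\<integral>x. \<rho> x powr m \<partial>lborel)"
        unfolding abs using Lm by simp
      have b0: "0 \<le> (\<integral>x. \<bar>\<sigma> n x\<bar> powr m \<partial>lborel)" by (rule integral_nonneg_AE) simp
      have "(\<integral>x. \<bar>\<sigma> n x\<bar> \<partial>lborel) powr e \<le> (\<integral>x. \<rho> x \<partial>lborel) powr e"
        using a0 a1 e by (intro powr_mono2) auto
      then show ?thesis unfolding den_def using b0 b1 by (intro mult_mono) auto
    qed
    then have "ennreal (r * den e m (\<sigma> n)) \<le> ennreal B"
      unfolding B_def using rpos by (intro ennreal_leI mult_left_mono) auto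
    finally show ?thesis .
  qed
  have "Pf s q \<rho> \<le> (SUP n. Pf s q (\<sigma> n))"
    by (rule Pf_le_SUP[OF pa(1,2) _ \<open>\<rho> \<in> _\<close> T(1) T(2) T(3) T(4) T(5)]) (use pa in \<open>simp add: q_def\<close>)
  also have "\<dots> \<le> ennreal B" by (rule SUP_least) (rule each)
  finally show ?thesis unfolding B_def e_def q_def .
qed

lemma crit_mass_eq:
  assumes "m = crit_exp DIM('a::euclidean_space) s p"
  shows "crit_mass TYPE('a) p s chi
     = (sob_exp DIM('a) s p / (chi * real_of_ereal (HLS_const TYPE('a) p m s))) powr (real DIM('a) / (s * conj_exp p))"
  using assms by (simp add: crit_mass_def Let_def)

lemma sob_pos:
  assumes p: "1 < p" and sp: "0 < s * p" "s * p < real DIM('a::euclidean_space)"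
  shows "0 < sob_exp DIM('a) s p"
  using p sp by (simp add: sob_exp_def)

lemma H_real:
  assumes p: "1 < p" and sp: "0 < s * p" "s * p < real DIM('a::euclidean_space)"
    and m: "m = crit_exp DIM('a) s p" and chi: "0 < chi" and Mc: "0 < crit_mass TYPE('a) p s chi"
  shows "HLS_const TYPE('a) p m s = ereal (real_of_ereal (HLS_const TYPE('a) p m s))"
    "0 < real_of_ereal (HLS_const TYPE('a) p m s)"
proof -
  have Hp: "0 < HLS_const TYPE('a) p m s" by (rule H_pos[OF p sp m])
  have "HLS_const TYPE('a) p m s \<noteq> \<infinity>"
  proof
    assume "HLS_const TYPE('a) p m s = \<infinity>"
    then have "crit_mass TYPE('a) p s chi = 0" unfolding crit_mass_eq[OF m] by simp
    then show False using Mc by simp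
  qed
  then show "HLS_const TYPE('a) p m s = ereal (real_of_ereal (HLS_const TYPE('a) p m s))"
    "0 < real_of_ereal (HLS_const TYPE('a) p m s)"
    using Hp by (cases "HLS_const TYPE('a) p m s"; simp)+
qed

lemma case_crit_le:
  assumes p: "1 < p" and sp: "0 < s * p" "s * p < real DIM('a::euclidean_space)"
    and m: "m = crit_exp DIM('a) s p" and chi: "0 < chi" and M: "0 < M"
    and MMc: "M \<le> crit_mass TYPE('a) p s chi"
  shows "Inf (free_energy s p m chi ` (adm_class m M :: ('a \<Rightarrow> real) set)) = 0"
proof -
  note pa = params[OF p sp]
  have m1: "1 < m" using pa m by simp
  define q where "q = conj_exp p"
  define e where "e = s * q / real DIM('a)"
  define r where "r = real_of_ereal (HLS_const TYPE('a) p m s)"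
  define sob where "sob = sob_exp DIM('a) s p"
  have q: "1 < q" using pa by (simp add: q_def)
  have epos: "0 < e" using pa q by (simp add: e_def)
  have Mc: "0 < crit_mass TYPE('a) p s chi" using M MMc by simp
  have H: "HLS_const TYPE('a) p m s = ereal r" and r: "0 < r"
    using H_real[OF p sp m chi Mc] by (simp_all add: r_def)
  have sob: "0 < sob" using sob_pos[OF p sp] by (simp add: sob_def)
  have sobq: "sob / q = 1 / (m - 1)" using pa(7) m by (simp add: sob_def q_def)
  have Mce: "crit_mass TYPE('a) p s chi = (sob / (chi * r)) powr (1 / e)"
    unfolding crit_mass_eq[OF m] by (simp add: sob_def r_def e_def q_def)
  have "M powr e \<le> crit_mass TYPE('a) p s chi powr e"
    using M MMc epos by (intro powr_mono2) auto
  also have "\<dots> = sob / (chi * r)"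
    unfolding Mce using sob chi r epos by (simp add: powr_powr)
  finally have rM: "r * M powr e \<le> sob / chi" using r chi by (simp add: field_simps)
  have lower: "0 \<le> free_energy s p m chi \<rho>" if \<rho>: "\<rho> \<in> (adm_class m M :: ('a \<Rightarrow> real) set)" for \<rho>
  proof -
    note D = adm_classD[OF \<rho>]
    define E where "E = (\<integral>x. \<rho> x powr m \<partial>lborel)"
    have E: "0 \<le> E" unfolding E_def by (rule E_nonneg)
    have Pb0: "Pf s q \<rho> \<le> ennreal (r * (M powr e * E))"
      using Pf_crit_bound[OF p sp m H D(1) D(3) D(2) D(4)] D(5) by (simp add: E_def e_def q_def)
    have "r * (M powr e * E) \<le> sob / chi * E"
      using mult_right_mono[OF rM E] by (simp add: mult.assoc)
    then have Pb: "Pf s q \<rho> \<le> ennreal (sob / chi * E)" using Pb0 by (meson ennreal_leI order_trans)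
    have sE: "0 \<le> sob / chi * E" using sob chi E by simp
    from Pb obtain P where P01: "Pf s q \<rho> = ennreal P" "0 \<le> P"
      by (cases "Pf s q \<rho>") (auto simp: top_unique)
    have P3: "P \<le> sob / chi * E" using Pb P01 ennreal_le_iff[OF sE, of P] by simp
    note P = P01 P3
    have "free_energy s p m chi \<rho> = ereal (1 / (m - 1) * E - chi / q * P)"
      unfolding E_def q_def by (rule free_energy_fin[OF P(1)[unfolded q_def] P(2)])
    moreover have "chi / q * P \<le> chi / q * (sob / chi * E)"
      using P(3) chi q by (intro mult_left_mono) auto
    moreover have "chi / q * (sob / chi * E) = 1 / (m - 1) * E"
    proof -
      have "chi / q * (sob / chi * E) = sob / q * E" using chi by simp
      then show ?thesis using sobq by simp
    qed
    ultimately show ?thesis by simp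
  qed
  have ge: "0 \<le> Inf (free_energy s p m chi ` (adm_class m M :: ('a \<Rightarrow> real) set))"
    by (rule INF_greatest) (rule lower)
  define r0 where "r0 = (rho0 M :: 'a \<Rightarrow> real)"
  have rY: "r0 \<in> adm_class m M" unfolding r0_def by (rule rho0_adm[OF M m1])
  note D = adm_classD[OF rY]
  define E0 where "E0 = (\<integral>x. r0 x powr m \<partial>lborel)"
  have "Pf s q r0 \<le> ennreal (r * (M powr e * E0))"
    using Pf_crit_bound[OF p sp m H D(1) D(3) D(2) D(4)] D(5) by (simp add: E0_def e_def q_def)
  then obtain P0 where P0: "Pf s q r0 = ennreal P0" "0 \<le> P0"
    by (cases "Pf s q r0") (auto simp: top_unique)
  define f0 where "f0 = 1 / (m - 1) * E0 - chi / q * P0"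
  have F0: "free_energy s p m chi r0 = ereal f0"
    unfolding f0_def E0_def q_def by (rule free_energy_fin[OF P0(1)[unfolded q_def] P0(2)])
  have f0: "0 \<le> f0" using lower[OF rY] F0 by simp
  define a where "a = real DIM('a) * (m - 1)"
  have a: "0 < a" using m1 by (simp add: a_def)
  have le: "Inf (free_energy s p m chi ` (adm_class m M :: ('a \<Rightarrow> real) set)) \<le> 0 + ereal \<epsilon>" if eps: "0 < \<epsilon>" for \<epsilon>
  proof -
    define c where "c = (\<epsilon> / (f0 + 1)) powr (1 / a)"
    have c: "0 < c" using eps f0 by (simp add: c_def)
    have ca: "c powr a = \<epsilon> / (f0 + 1)" using eps f0 a by (simp add: c_def powr_powr)
    have "free_energy s p m chi (dil c r0) = ereal (c powr a * (1 / (m - 1) * E0) - c powr a * (chi / q * P0))"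
      unfolding E0_def q_def a_def using free_energy_dil[OF p sp D(1) D(3) P0[unfolded q_def] c, of m chi] m by simp
    also have "c powr a * (1 / (m - 1) * E0) - c powr a * (chi / q * P0) = c powr a * f0"
      by (simp add: f0_def algebra_simps)
    also have "c powr a * f0 < \<epsilon>"
    proof -
      have "c powr a * f0 = \<epsilon> * (f0 / (f0 + 1))" unfolding ca using f0 by (simp add: field_simps)
      also have "\<dots> < \<epsilon> * 1" using eps f0 by (intro mult_strict_left_mono) auto
      finally show ?thesis by simp
    qed
    finally have "free_energy s p m chi (dil c r0) < ereal \<epsilon>" by simp
    moreover have "dil c r0 \<in> adm_class m M" by (rule adm_dil[OF rY c m1])
    ultimately show ?thesis by (metis INF_lower add_0 order.trans less_imp_le)
  qed
  have "Inf (free_energy s p m chi ` (adm_class m M :: ('a \<Rightarrow> real) set)) \<le> 0"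
    by (rule ereal_le_epsilon2) (use le in auto)
  then show ?thesis using ge by simp
qed

lemma ereal_div_gt_imp:
  assumes d: "0 < d" and T: "0 \<le> T" and lt: "ereal T < enn2ereal X / ereal d"
  shows "ennreal (T * d) < X"
proof -
  have "ereal d * ereal T < enn2ereal X"
    using lt d by (subst (asm) ereal_less_divide_pos) auto
  then have "enn2ereal (ennreal (T * d)) < enn2ereal X"
    using d T by (simp add: enn2ereal_ennreal mult.commute)
  then show ?thesis by (simp add: less_ennreal.rep_eq)
qed

lemma integral_translate:
  fixes f :: "'a::euclidean_space \<Rightarrow> real"
  shows "(\<integral>y. f (y + t) \<partial>lborel) = (\<integral>y. f y \<partial>lborel)"
  using lborel_integral_affine_eucl[of 1 f t] by (simp add: add.commute)

lemma neg_dil_to_minf: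
  fixes f3 a B :: real
  assumes "f3 < 0" "0 < a"
  shows "\<exists>c>0. c powr a * f3 < B"
proof -
  define c where "c = ((\<bar>B\<bar> + 1) / (- f3)) powr (1 / a)"
  have c: "0 < c" using assms by (simp add: c_def)
  have "c powr a = (\<bar>B\<bar> + 1) / (- f3)" using assms by (simp add: c_def powr_powr)
  then have "c powr a * f3 = - (\<bar>B\<bar> + 1)" using assms by (simp add: field_simps)
  then show ?thesis using c by (intro exI[of _ c]) auto
qed

lemma crit_negative_element:
  assumes p: "1 < p" and sp: "0 < s * p" "s * p < real DIM('a::euclidean_space)"
    and m: "m = crit_exp DIM('a) s p" and chi: "0 < chi" and M: "0 < M"
    and h: "h \<in> (HLSset m :: ('a \<Rightarrow> real) set)"
    and lt: "ereal (sob_exp DIM('a) s p / (chi * M powr (s * conj_exp p / real DIM('a))))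
             < enn2ereal (numer s (conj_exp p) h) / ereal (den (s * conj_exp p / real DIM('a)) m h)"
  shows "\<exists>\<rho>\<in>(adm_class m M :: ('a \<Rightarrow> real) set). free_energy s p m chi \<rho> < 0"
proof -
  note pa = params[OF p sp]
  have m1: "1 < m" using pa m by simp
  define q where "q = conj_exp p"
  define e where "e = s * q / real DIM('a)"
  define sob where "sob = sob_exp DIM('a) s p"
  define T where "T = sob / (chi * M powr e)"
  have q: "1 < q" using pa by (simp add: q_def)
  have epos: "0 < e" using pa q by (simp add: e_def)
  have qme: "q = m + e" using m by (simp add: crit_exp_def q_def e_def)
  have sob: "0 < sob" using sob_pos[OF p sp] by (simp add: sob_def)
  have sobq: "sob / q = 1 / (m - 1)" using pa(7) m by (simp add: sob_def q_def)
  have Tpos: "0 < T" using sob chi M by (simp add: T_def)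
  have hm[measurable]: "h \<in> borel_measurable borel" and hi1: "integrable lborel (\<lambda>x. \<bar>h x\<bar>)"
    and him: "integrable lborel (\<lambda>x. \<bar>h x\<bar> powr m)"
    using h by (auto simp: HLSset_def in_Lq_def powr_one_gt_zero_iff)
  define d where "d = den e m h"
  have d: "0 < d" unfolding d_def using den_pos[OF h] m1 by simp
  have "ennreal (T * d) < numer s q h"
    using ereal_div_gt_imp[OF d less_imp_le[OF Tpos]] lt by (simp add: T_def d_def e_def q_def sob_def)
  also have "numer s q h \<le> Pf s q (\<lambda>y. \<bar>h y\<bar>)"
    unfolding numer_def Pf_def by (intro nn_integral_mono numer_le[OF pa(1,2) hm]) (use q in simp)
  also have "Pf s q (\<lambda>y. \<bar>h y\<bar>) \<le> (SUP n. Pf s q (\<lambda>y. \<bar>h y\<bar> * indicator (cball 0 (real n)) y))"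
  proof (rule Pf_le_SUP[OF pa(1,2)])
    show "\<exists>n. \<bar>h y\<bar> * indicator (cball 0 (real n)) y = \<bar>h y\<bar>" for y :: 'a
    proof -
      obtain n where "norm y \<le> real n" using real_arch_simple by blast
      then show ?thesis by (intro exI[of _ n]) (auto simp: indicator_def)
    qed
  qed (use q in \<open>auto simp: indicator_def\<close>)
  finally obtain n where n: "ennreal (T * d) < Pf s q (\<lambda>y. \<bar>h y\<bar> * indicator (cball 0 (real n)) y)"
    by (auto simp: less_SUP_iff)
  define g where "g = (\<lambda>y. \<bar>h y\<bar> * indicator (cball 0 (real n)) y :: real)"
  have gm[measurable]: "g \<in> borel_measurable borel" unfolding g_def by measurable
  have g0: "0 \<le> g y" for y by (simp add: g_def)
  have gh: "g y \<le> \<bar>h y\<bar>" for y by (simp add: g_def indicator_def)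
  have gi: "integrable lborel g"
    by (rule Bochner_Integration.integrable_bound[OF hi1]) (use g0 gh in auto)
  note gLm = bounded_in_Lq[OF gm g0 gh him] m1
  have gim: "integrable lborel (\<lambda>x. g x powr m)" using gLm g0 by (simp add: in_Lq_def)
  have gfm: "integrable lborel (\<lambda>y. g y *\<^sub>R y)"
  proof (rule Bochner_Integration.integrable_bound[of _ "\<lambda>y. real n * g y"])
    show "integrable lborel (\<lambda>y. real n * g y)" using gi by simp
    show "(\<lambda>y. g y *\<^sub>R y) \<in> borel_measurable lborel" by measurable
    show "AE y in lborel. norm (g y *\<^sub>R y) \<le> norm (real n * g y)"
      by (intro AE_I2) (auto simp: g_def indicator_def mult.commute intro: mult_right_mono)
  qed
  define L where "L = (\<integral>y. g y \<partial>lborel)"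
  define Eg where "Eg = (\<integral>y. g y powr m \<partial>lborel)"
  have Pg: "ennreal (T * d) < Pf s q g" using n by (simp add: g_def)
  have gnz: "\<not> (AE y in lborel. g y = 0)"
  proof
    assume "AE y in lborel. g y = 0"
    then have "Pf s q g = 0" by (rule Pf_AE0[OF gm])
    then show False using Pg by simp
  qed
  have L: "0 < L"
  proof -
    have "L \<noteq> 0"
    proof
      assume "L = 0"
      then have "AE y in lborel. g y = 0" using gi g0 unfolding L_def
        by (subst (asm) integral_nonneg_eq_0_iff_AE) auto
      then show False using gnz by simp
    qed
    moreover have "0 \<le> L" unfolding L_def by (rule integral_nonneg_AE) (simp add: g0)
    ultimately show ?thesis by simp
  qed
  have Eg: "0 \<le> Eg" unfolding Eg_def by (rule E_nonneg)
  have dg: "L powr e * Eg \<le> d"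
  proof -
    have a1: "L \<le> (\<integral>x. \<bar>h x\<bar> \<partial>lborel)" unfolding L_def using gi hi1 gh by (intro integral_mono) auto
    have "L powr e \<le> (\<integral>x. \<bar>h x\<bar> \<partial>lborel) powr e" using a1 L epos by (intro powr_mono2) auto
    moreover have "Eg \<le> (\<integral>x. \<bar>h x\<bar> powr m \<partial>lborel)" unfolding Eg_def using gLm by simp
    ultimately show ?thesis unfolding d_def den_def using Eg by (intro mult_mono) auto
  qed
  define k where "k = M / L"
  have k: "0 < k" using M L by (simp add: k_def)
  define g' where "g' = (\<lambda>y. k * g y)"
  have g'm[measurable]: "g' \<in> borel_measurable borel" unfolding g'_def by measurable
  have g'0: "0 \<le> g' y" for y using k g0 by (simp add: g'_def)
  have g'i: "integrable lborel g'" unfolding g'_def using gi by simp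
  have g'pow: "g' y powr m = k powr m * g y powr m" for y using k g0 by (simp add: g'_def powr_mult)
  have g'im: "integrable lborel (\<lambda>x. g' x powr m)" unfolding g'pow using gim by simp
  have g'mass: "(\<integral>x. g' x \<partial>lborel) = M" using L M by (simp add: g'_def k_def L_def)
  have g'fm: "integrable lborel (\<lambda>x. g' x *\<^sub>R x)"
  proof -
    have eq: "(\<lambda>x. g' x *\<^sub>R x) = (\<lambda>x. k *\<^sub>R (g x *\<^sub>R x))" by (auto simp: g'_def)
    show ?thesis unfolding eq by (rule integrable_scaleR_right[OF gfm])
  qed
  define t where "t = (1/M) *\<^sub>R (\<integral>x. g' x *\<^sub>R x \<partial>lborel)"
  define \<rho> where "\<rho> = (\<lambda>y. g' (y + t))"
  have \<rho>Y: "\<rho> \<in> (adm_class m M :: ('a \<Rightarrow> real) set)"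
    unfolding \<rho>_def t_def by (rule adm_translate[OF g'0 g'i g'im g'mass M g'fm])
  have "Pf s q \<rho> = Pf s q g'" unfolding \<rho>_def by (rule Pf_translate[OF g'm])
  also have "\<dots> = ennreal (k powr q) * Pf s q g"
    unfolding g'_def by (rule Pf_cmult[OF pa(1,2)]) (use k q in auto)
  finally have Pr: "Pf s q \<rho> = ennreal (k powr q) * Pf s q g" .
  have Er: "(\<integral>x. \<rho> x powr m \<partial>lborel) = k powr m * Eg"
    unfolding \<rho>_def Eg_def using integral_translate[of "\<lambda>y. g' y powr m" t] by (simp add: g'pow)
  have cq: "0 < chi / q" using chi q by simp
  show ?thesis
  proof (cases "Pf s q g = top")
    case True
    then have "Pf s q \<rho> = top" unfolding Pr using k by (simp add: ennreal_mult_top)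
    then have "free_energy s p m chi \<rho> = -\<infinity>" using cq by (intro free_energy_top) (auto simp: q_def)
    then show ?thesis using \<rho>Y by (intro bexI[of _ \<rho>]) auto
  next
    case False
    then obtain P where P: "Pf s q g = ennreal P" "0 \<le> P" by (cases "Pf s q g") auto
    have TdP: "T * d < P" using Pg P Tpos d by (simp add: ennreal_less_iff)
    have Pr': "Pf s (conj_exp p) \<rho> = ennreal (k powr q * P)" "0 \<le> k powr q * P"
      using Pr P k by (simp_all add: ennreal_mult q_def)
    have F: "free_energy s p m chi \<rho> = ereal (1 / (m - 1) * (k powr m * Eg) - chi / q * (k powr q * P))"
      using free_energy_fin[OF Pr'] Er by (simp add: q_def)
    have key: "1 / (m - 1) * (k powr m * Eg) < chi / q * (k powr q * P)"
    proof -
      have "T * (L powr e * Eg) \<le> T * d" using dg Tpos by (intro mult_left_mono) auto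
      then have TP: "T * (L powr e * Eg) < P" using TdP by linarith
      have kL: "k powr e * L powr e = M powr e" using k L by (simp add: k_def powr_mult[symmetric])
      have "1 / (m - 1) * (k powr m * Eg) = chi / q * (k powr m * (k powr e * (T * (L powr e * Eg))))"
      proof -
        have A1: "k powr e * (T * (L powr e * Eg)) = (T * M powr e) * Eg"
          using kL by (simp add: algebra_simps)
        have A2: "T * M powr e = sob / chi" using M chi by (simp add: T_def)
        have A3: "k powr e * (T * (L powr e * Eg)) = sob / chi * Eg" using A1 A2 by simp
        have "chi / q * (k powr m * (k powr e * (T * (L powr e * Eg)))) = chi / q * (k powr m * (sob / chi * Eg))"
          by (simp only: A3)
        also have "\<dots> = sob / q * (k powr m * Eg)" using chi by (simp add: field_simps)
        also have "\<dots> = 1 / (m - 1) * (k powr m * Eg)" using sobq by simp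
        finally show ?thesis by simp
      qed
      also have "\<dots> < chi / q * (k powr m * (k powr e * P))"
        using TP cq k by (intro mult_strict_left_mono) auto
      also have "k powr m * (k powr e * P) = k powr q * P"
        using qme by (simp add: powr_add mult.assoc)
      finally show ?thesis .
    qed
    have "free_energy s p m chi \<rho> < 0" unfolding F using key by simp
    then show ?thesis using \<rho>Y by (intro bexI[of _ \<rho>]) auto
  qed
qed

lemma case_crit_gt:
  assumes p: "1 < p" and sp: "0 < s * p" "s * p < real DIM('a::euclidean_space)"
    and m: "m = crit_exp DIM('a) s p" and chi: "0 < chi" and M: "0 < M"
    and McM: "crit_mass TYPE('a) p s chi < M"
  shows "Inf (free_energy s p m chi ` (adm_class m M :: ('a \<Rightarrow> real) set)) = -\<infinity>"
proof -
  note pa = params[OF p sp]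
  have m1: "1 < m" using pa m by simp
  define q where "q = conj_exp p"
  define e where "e = s * q / real DIM('a)"
  define sob where "sob = sob_exp DIM('a) s p"
  define T where "T = sob / (chi * M powr e)"
  have q: "1 < q" using pa by (simp add: q_def)
  have epos: "0 < e" using pa q by (simp add: e_def)
  have sob: "0 < sob" using sob_pos[OF p sp] by (simp add: sob_def)
  define H where "H = HLS_const TYPE('a) p m s"
  have Hp: "0 < H" unfolding H_def by (rule H_pos[OF p sp m])
  have TH: "ereal T < H"
  proof (cases H)
    case (real r)
    then have r: "0 < r" using Hp by simp
    have Mce: "crit_mass TYPE('a) p s chi = (sob / (chi * r)) powr (1 / e)"
      unfolding crit_mass_eq[OF m] using real by (simp add: sob_def H_def e_def q_def)
    have "crit_mass TYPE('a) p s chi powr e < M powr e"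
      using McM epos by (intro powr_less_mono2) (auto simp: Mce)
    also have "crit_mass TYPE('a) p s chi powr e = sob / (chi * r)"
      unfolding Mce using sob chi r epos by (simp add: powr_powr)
    finally have "sob / (chi * r) < M powr e" .
    then have "sob < M powr e * (chi * r)" using chi r by (simp add: divide_less_eq)
    then have "T < r" using chi M by (simp add: T_def divide_less_eq mult_ac)
    then show ?thesis using real by simp
  next
    case PInf then show ?thesis by simp
  next
    case MInf then show ?thesis using Hp by simp
  qed
  then obtain h where h: "h \<in> (HLSset m :: ('a \<Rightarrow> real) set)"
    and hlt: "ereal T < enn2ereal (numer s (conj_exp p) h) / ereal (den (s * conj_exp p / real DIM('a)) m h)"
    unfolding H_def HLS_eq[OF p sp m] by (auto simp: less_SUP_iff)
  obtain \<rho> where \<rho>Y: "\<rho> \<in> (adm_class m M :: ('a \<Rightarrow> real) set)" and F: "free_energy s p m chi \<rho> < 0"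
    using crit_negative_element[OF p sp m chi M h] hlt by (auto simp: T_def sob_def e_def q_def)
  note D = adm_classD[OF \<rho>Y]
  have cq: "0 < chi / q" using chi q by simp
  show ?thesis
  proof (cases "Pf s q \<rho> = top")
    case True
    then have "free_energy s p m chi \<rho> = -\<infinity>" using cq by (intro free_energy_top) (auto simp: q_def)
    then have "Inf (free_energy s p m chi ` (adm_class m M :: ('a \<Rightarrow> real) set)) \<le> -\<infinity>"
      using \<rho>Y by (metis INF_lower)
    then show ?thesis by simp
  next
    case False
    then obtain P where P: "Pf s q \<rho> = ennreal P" "0 \<le> P" by (cases "Pf s q \<rho>") auto
    define E where "E = (\<integral>x. \<rho> x powr m \<partial>lborel)"
    define f3 where "f3 = 1 / (m - 1) * E - chi / q * P"
    have "free_energy s p m chi \<rho> = ereal f3"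
      unfolding f3_def E_def q_def by (rule free_energy_fin[OF P(1)[unfolded q_def] P(2)])
    then have f3: "f3 < 0" using F by simp
    define a where "a = real DIM('a) * (m - 1)"
    have a: "0 < a" using m1 by (simp add: a_def)
    show ?thesis
    proof (rule ereal_all_less_minf)
      fix B :: real
      obtain c where c: "0 < c" "c powr a * f3 < B" using neg_dil_to_minf[OF f3 a, of B] by blast
      have "free_energy s p m chi (dil c \<rho>) = ereal (c powr a * (1 / (m - 1) * E) - c powr a * (chi / q * P))"
        unfolding E_def q_def a_def using free_energy_dil[OF p sp D(1) D(3) P[unfolded q_def] c(1), of m chi] m by simp
      also have "c powr a * (1 / (m - 1) * E) - c powr a * (chi / q * P) = c powr a * f3"
        by (simp add: f3_def algebra_simps)
      finally have "free_energy s p m chi (dil c \<rho>) < ereal B" using c(2) by simp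
      moreover have "dil c \<rho> \<in> adm_class m M" by (rule adm_dil[OF \<rho>Y c(1) m1])
      ultimately show "Inf (free_energy s p m chi ` (adm_class m M :: ('a \<Rightarrow> real) set)) < ereal B"
        by (metis INF_lower order.strict_trans1)
    qed
  qed
qed

theorem mainTheorem12:
  fixes p s m chi M :: real
  assumes "1 < p" and "0 < s * p" and "s * p < real DIM('a::euclidean_space)"
    and "1 < m" and "0 < chi" and "0 < M"
  defines "I \<equiv> Inf (free_energy s p m chi ` (adm_class m M :: ('a \<Rightarrow> real) set))"
    and "mc \<equiv> crit_exp DIM('a) s p"
    and "Mc \<equiv> crit_mass TYPE('a) p s chi"
  shows "(m < mc \<longrightarrow> I = -\<infinity>)
    \<and> (m = mc \<longrightarrow> ((M \<le> Mc \<longrightarrow> I = 0) \<and> (Mc < M \<longrightarrow> I = -\<infinity>)))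
    \<and> (mc < m \<longrightarrow> -\<infinity> < I \<and> I < 0)"
  unfolding I_def mc_def Mc_def
  using case_sub[OF assms(1-3) assms(4) _ assms(5,6)]
    case_crit_le[OF assms(1-3) _ assms(5,6)]
    case_crit_gt[OF assms(1-3) _ assms(5,6)]
    case_super_bdd[OF assms(1-3) assms(4) _ assms(5,6)]
    case_super_neg[OF assms(1-3) assms(4) _ assms(5,6)]
  by blast

end
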